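(* $(\overline{\mathcal{D}},\overline{\delta},\overline{\varepsilon})$ is a comonad on $\mathsf{CLAC}$.
   Context: Composition in diagrammatic order. A Cartesian left additive category: category with finite products, hom-sets commutative monoids with $f(g+h)=fg+fh$, $f0=0$, projections additive. $\mathsf{CLAC}$: Cartesian left additive categories and functors preserving finite products strictly ($\mathsf{F}(A\times B)=\mathsf{F}A\times\mathsf{F}B$, terminal object, $\mathsf{F}(\pi_j)=\pi_j$) and $+$, $0$. Let $\mathsf{P}(A)=A\times A$, $\mathsf{P}(f)=f\times f$. A pre-$\mathsf{D}$-sequence $f_\bullet:A\to B$ is $(f_n)_{n\ge0}$ with $f_n:\mathsf{P}^n(A)\to B$. $\mathsf{T}(f_\bullet)_n=\langle\mathsf{P}^n(\pi_0)f_n,f_{n+1}\rangle$ (a sequence $\mathsf{P}(A)\to\mathsf{P}(B)$); $\mathsf{D}[f_\bullet]_n=f_{n+1}$. $\overline{\mathcal{D}}[\mathbb{X}]$: objects of $\mathbb{X}$, pre-$\mathsf{D}$-sequences, identity $i_0=1$, $i_n=\pi_1\cdots\pi_1$, composition $(f_\bullet\ast g_\bullet)_n=\mathsf{T}^n(f_\bullet)_0g_n$, finite products (projections $i_\bullet\cdot\pi_j$, $(i_\bullet\cdot\pi_j)_n=i_n\pi_j$; pairing $\langle f_n,g_n\rangle$; terminal object of $\mathbb{X}$), addition $0_n=0$, $(f_\bullet+g_\bullet)_n=f_n+g_n$. $\overline{\mathcal{D}}[\mathsf{F}](f_\bullet)_n=\mathsf{F}(f_n)$. $\overline{\varepsilon}(f_\bullet)=f_0$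 (identity on objects). $\overline{\delta}(f_\bullet)$ is the sequence of $\overline{\mathcal{D}}[\mathbb{X}]$ with $0$-th term $f_\bullet$ and $n$-th term $\mathsf{D}^n[f_\bullet]$ (identity on objects). *)

theory Defs
  imports Main
begin

text \<open>Operations carry their (co)domain objects as arguments; composition is diagrammatic:
  cComp A B C f g is "f then g" for f : A -> B and g : B -> C.\<close>

record ('o, 'a) clac_sig =
  cOb   :: "'o set"
  cHom  :: "'o \<Rightarrow> 'o \<Rightarrow> 'a set"
  cId   :: "'o \<Rightarrow> 'a"
  cComp :: "'o \<Rightarrow> 'o \<Rightarrow> 'o \<Rightarrow> 'a \<Rightarrow> 'a \<Rightarrow> 'a"
  cProd :: "'o \<Rightarrow> 'o \<Rightarrow> 'o"
  cPi0  :: "'o \<Rightarrow> 'o \<Rightarrow> 'a"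
  cPi1  :: "'o \<Rightarrow> 'o \<Rightarrow> 'a"
  cPair :: "'o \<Rightarrow> 'o \<Rightarrow> 'o \<Rightarrow> 'a \<Rightarrow> 'a \<Rightarrow> 'a"
  cTerm :: "'o"
  cBang :: "'o \<Rightarrow> 'a"
  cAdd  :: "'o \<Rightarrow> 'o \<Rightarrow> 'a \<Rightarrow> 'a \<Rightarrow> 'a"
  cZero :: "'o \<Rightarrow> 'o \<Rightarrow> 'a"

definition is_category :: "('o, 'a, 'z) clac_sig_scheme \<Rightarrow> bool" where
  "is_category X \<longleftrightarrow>
     (\<forall>A B f. f \<in> cHom X A B \<longrightarrow> A \<in> cOb X \<and> B \<in> cOb X) \<and>
     (\<forall>A B A' B' f. f \<in> cHom X A B \<longrightarrow> f \<in> cHom X A' B' \<longrightarrow> A = A' \<and> B = B') \<and>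
     (\<forall>A \<in> cOb X. cId X A \<in> cHom X A A) \<and>
     (\<forall>A B C f g. f \<in> cHom X A B \<longrightarrow> g \<in> cHom X B C \<longrightarrow> cComp X A B C f g \<in> cHom X A C) \<and>
     (\<forall>A B f. f \<in> cHom X A B \<longrightarrow> cComp X A A B (cId X A) f = f \<and> cComp X A B B f (cId X B) = f) \<and>
     (\<forall>A B C D f g h. f \<in> cHom X A B \<longrightarrow> g \<in> cHom X B C \<longrightarrow> h \<in> cHom X C D \<longrightarrow>
        cComp X A C D (cComp X A B C f g) h = cComp X A B D f (cComp X B C D g h))"

definition has_finite_products :: "('o, 'a, 'z) clac_sig_scheme \<Rightarrow> bool" where
  "has_finite_products X \<longleftrightarrow>
     (\<forall>A \<in> cOb X. \<forall>B \<in> cOb X. cProd X A B \<in> cOb X \<and>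
        cPi0 X A B \<in> cHom X (cProd X A B) A \<and> cPi1 X A B \<in> cHom X (cProd X A B) B) \<and>
     (\<forall>C A B f g. f \<in> cHom X C A \<longrightarrow> g \<in> cHom X C B \<longrightarrow>
        cPair X C A B f g \<in> cHom X C (cProd X A B) \<and>
        cComp X C (cProd X A B) A (cPair X C A B f g) (cPi0 X A B) = f \<and>
        cComp X C (cProd X A B) B (cPair X C A B f g) (cPi1 X A B) = g) \<and>
     (\<forall>C A B h. A \<in> cOb X \<longrightarrow> B \<in> cOb X \<longrightarrow> h \<in> cHom X C (cProd X A B) \<longrightarrow>
        cPair X C A B (cComp X C (cProd X A B) A h (cPi0 X A B))
                      (cComp X C (cProd X A B) B h (cPi1 X A B)) = h) \<and>
     cTerm X \<in> cOb X \<and>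
     (\<forall>A \<in> cOb X. cBang X A \<in> cHom X A (cTerm X)) \<and>
     (\<forall>A h. h \<in> cHom X A (cTerm X) \<longrightarrow> h = cBang X A)"

definition is_left_additive :: "('o, 'a, 'z) clac_sig_scheme \<Rightarrow> bool" where
  "is_left_additive X \<longleftrightarrow>
     (\<forall>A B f g. f \<in> cHom X A B \<longrightarrow> g \<in> cHom X A B \<longrightarrow> cAdd X A B f g \<in> cHom X A B) \<and>
     (\<forall>A \<in> cOb X. \<forall>B \<in> cOb X. cZero X A B \<in> cHom X A B) \<and>
     (\<forall>A B f g h. f \<in> cHom X A B \<longrightarrow> g \<in> cHom X A B \<longrightarrow> h \<in> cHom X A B \<longrightarrow>
        cAdd X A B (cAdd X A B f g) h = cAdd X A B f (cAdd X A B g h)) \<and>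
     (\<forall>A B f g. f \<in> cHom X A B \<longrightarrow> g \<in> cHom X A B \<longrightarrow> cAdd X A B f g = cAdd X A B g f) \<and>
     (\<forall>A B f. f \<in> cHom X A B \<longrightarrow> cAdd X A B f (cZero X A B) = f) \<and>
     (\<forall>A B C f g h. f \<in> cHom X A B \<longrightarrow> g \<in> cHom X B C \<longrightarrow> h \<in> cHom X B C \<longrightarrow>
        cComp X A B C f (cAdd X B C g h) = cAdd X A C (cComp X A B C f g) (cComp X A B C f h)) \<and>
     (\<forall>A B C f. f \<in> cHom X A B \<longrightarrow> C \<in> cOb X \<longrightarrow> cComp X A B C f (cZero X B C) = cZero X A C) \<and>
     (\<forall>C A B f g. A \<in> cOb X \<longrightarrow> B \<in> cOb X \<longrightarrow> f \<in> cHom X C (cProd X A B) \<longrightarrow> g \<in> cHom X C (cProd X A B) \<longrightarrow>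
        cComp X C (cProd X A B) A (cAdd X C (cProd X A B) f g) (cPi0 X A B)
          = cAdd X C A (cComp X C (cProd X A B) A f (cPi0 X A B)) (cComp X C (cProd X A B) A g (cPi0 X A B)) \<and>
        cComp X C (cProd X A B) B (cAdd X C (cProd X A B) f g) (cPi1 X A B)
          = cAdd X C B (cComp X C (cProd X A B) B f (cPi1 X A B)) (cComp X C (cProd X A B) B g (cPi1 X A B))) \<and>
     (\<forall>C A B. C \<in> cOb X \<longrightarrow> A \<in> cOb X \<longrightarrow> B \<in> cOb X \<longrightarrow>
        cComp X C (cProd X A B) A (cZero X C (cProd X A B)) (cPi0 X A B) = cZero X C A \<and>
        cComp X C (cProd X A B) B (cZero X C (cProd X A B)) (cPi1 X A B) = cZero X C B)"

definition is_clac :: "('o, 'a, 'z) clac_sig_scheme \<Rightarrow> bool" where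
  "is_clac X \<longleftrightarrow> is_category X \<and> has_finite_products X \<and> is_left_additive X"

type_synonym ('o, 'a, 'p, 'b) cfunctor = "('o \<Rightarrow> 'p) \<times> ('a \<Rightarrow> 'b)"

definition clac_hom :: "('o, 'a, 'z) clac_sig_scheme \<Rightarrow> ('p, 'b, 'w) clac_sig_scheme \<Rightarrow>
    ('o, 'a, 'p, 'b) cfunctor \<Rightarrow> bool" where
  "clac_hom X Y F \<longleftrightarrow>
     (\<forall>A \<in> cOb X. fst F A \<in> cOb Y) \<and>
     (\<forall>A B f. f \<in> cHom X A B \<longrightarrow> snd F f \<in> cHom Y (fst F A) (fst F B)) \<and>
     (\<forall>A \<in> cOb X. snd F (cId X A) = cId Y (fst F A)) \<and>
     (\<forall>A B C f g. f \<in> cHom X A B \<longrightarrow> g \<in> cHom X B C \<longrightarrow>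
        snd F (cComp X A B C f g) = cComp Y (fst F A) (fst F B) (fst F C) (snd F f) (snd F g)) \<and>
     (\<forall>A \<in> cOb X. \<forall>B \<in> cOb X.
        fst F (cProd X A B) = cProd Y (fst F A) (fst F B) \<and>
        snd F (cPi0 X A B) = cPi0 Y (fst F A) (fst F B) \<and>
        snd F (cPi1 X A B) = cPi1 Y (fst F A) (fst F B)) \<and>
     fst F (cTerm X) = cTerm Y \<and>
     (\<forall>A B f g. f \<in> cHom X A B \<longrightarrow> g \<in> cHom X A B \<longrightarrow>
        snd F (cAdd X A B f g) = cAdd Y (fst F A) (fst F B) (snd F f) (snd F g)) \<and>
     (\<forall>A \<in> cOb X. \<forall>B \<in> cOb X. snd F (cZero X A B) = cZero Y (fst F A) (fst F B))"

definition functor_eq :: "('o, 'a, 'z) clac_sig_scheme \<Rightarrow> ('o, 'a, 'p, 'b) cfunctor \<Rightarrow>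
    ('o, 'a, 'p, 'b) cfunctor \<Rightarrow> bool" where
  "functor_eq X F G \<longleftrightarrow>
     (\<forall>A \<in> cOb X. fst F A = fst G A) \<and> (\<forall>A B f. f \<in> cHom X A B \<longrightarrow> snd F f = snd G f)"

definition fid :: "('o, 'a, 'o, 'a) cfunctor" where
  "fid = (id, id)"

definition ffcomp :: "('o, 'a, 'p, 'b) cfunctor \<Rightarrow> ('p, 'b, 'q, 'c) cfunctor \<Rightarrow> ('o, 'a, 'q, 'c) cfunctor" where
  "ffcomp F G = (fst G \<circ> fst F, snd G \<circ> snd F)"

definition Pobj :: "('o, 'a, 'z) clac_sig_scheme \<Rightarrow> 'o \<Rightarrow> 'o" where
  "Pobj X A = cProd X A A"

definition Pn_obj :: "('o, 'a, 'z) clac_sig_scheme \<Rightarrow> nat \<Rightarrow> 'o \<Rightarrow> 'o" where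
  "Pn_obj X n A = (Pobj X ^^ n) A"

definition Parr :: "('o, 'a, 'z) clac_sig_scheme \<Rightarrow> 'o \<Rightarrow> 'o \<Rightarrow> 'a \<Rightarrow> 'a" where
  "Parr X A B f = cPair X (Pobj X A) B B (cComp X (Pobj X A) A B (cPi0 X A A) f)
                                         (cComp X (Pobj X A) A B (cPi1 X A A) f)"

primrec Pn_arr :: "('o, 'a, 'z) clac_sig_scheme \<Rightarrow> nat \<Rightarrow> 'o \<Rightarrow> 'o \<Rightarrow> 'a \<Rightarrow> 'a" where
  "Pn_arr X 0 A B f = f"
| "Pn_arr X (Suc n) A B f = Parr X (Pn_obj X n A) (Pn_obj X n B) (Pn_arr X n A B f)"

definition Tseq :: "('o, 'a, 'z) clac_sig_scheme \<Rightarrow> 'o \<Rightarrow> 'o \<Rightarrow> (nat \<Rightarrow> 'a) \<Rightarrow> nat \<Rightarrow> 'a" where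
  "Tseq X A B f = (\<lambda>n. cPair X (Pn_obj X n (Pobj X A)) B B
       (cComp X (Pn_obj X n (Pobj X A)) (Pn_obj X n A) B (Pn_arr X n (Pobj X A) A (cPi0 X A A)) (f n))
       (f (Suc n)))"

primrec Tn :: "('o, 'a, 'z) clac_sig_scheme \<Rightarrow> nat \<Rightarrow> 'o \<Rightarrow> 'o \<Rightarrow> (nat \<Rightarrow> 'a) \<Rightarrow> nat \<Rightarrow> 'a" where
  "Tn X 0 A B f = f"
| "Tn X (Suc n) A B f = Tseq X (Pn_obj X n A) (Pn_obj X n B) (Tn X n A B f)"

primrec Iseq :: "('o, 'a, 'z) clac_sig_scheme \<Rightarrow> 'o \<Rightarrow> nat \<Rightarrow> 'a" where
  "Iseq X A 0 = cId X A"
| "Iseq X A (Suc n) = cComp X (Pn_obj X (Suc n) A) (Pn_obj X n A) A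
                        (cPi1 X (Pn_obj X n A) (Pn_obj X n A)) (Iseq X A n)"

definition Dbar :: "('o, 'a, 'z) clac_sig_scheme \<Rightarrow> ('o, nat \<Rightarrow> 'a) clac_sig" where
  "Dbar X = \<lparr>
     cOb = cOb X,
     cHom = (\<lambda>A B. {f. \<forall>n. f n \<in> cHom X (Pn_obj X n A) B}),
     cId = Iseq X,
     cComp = (\<lambda>A B C f g n. cComp X (Pn_obj X n A) (Pn_obj X n B) C (Tn X n A B f 0) (g n)),
     cProd = cProd X,
     cPi0 = (\<lambda>A B n. cComp X (Pn_obj X n (cProd X A B)) (cProd X A B) A
                        (Iseq X (cProd X A B) n) (cPi0 X A B)),
     cPi1 = (\<lambda>A B n. cComp X (Pn_obj X n (cProd X A B)) (cProd X A B) B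
                        (Iseq X (cProd X A B) n) (cPi1 X A B)),
     cPair = (\<lambda>C A B f g n. cPair X (Pn_obj X n C) A B (f n) (g n)),
     cTerm = cTerm X,
     cBang = (\<lambda>A n. cBang X (Pn_obj X n A)),
     cAdd = (\<lambda>A B f g n. cAdd X (Pn_obj X n A) B (f n) (g n)),
     cZero = (\<lambda>A B n. cZero X (Pn_obj X n A) B) \<rparr>"

definition Dbar_map :: "('o, 'a, 'p, 'b) cfunctor \<Rightarrow> ('o, nat \<Rightarrow> 'a, 'p, nat \<Rightarrow> 'b) cfunctor" where
  "Dbar_map F = (fst F, \<lambda>f n. snd F (f n))"

definition eps_bar :: "('o, nat \<Rightarrow> 'a, 'o, 'a) cfunctor" where
  "eps_bar = (id, \<lambda>f. f 0)"

definition Dshift :: "(nat \<Rightarrow> 'a) \<Rightarrow> nat \<Rightarrow> 'a" where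
  "Dshift f = (\<lambda>n. f (Suc n))"

definition delta_bar :: "('o, nat \<Rightarrow> 'a, 'o, nat \<Rightarrow> nat \<Rightarrow> 'a) cfunctor" where
  "delta_bar = (id, \<lambda>f n. (Dshift ^^ n) f)"

end

theory Submission
  imports Defs
begin


locale clac =
  fixes X :: "('o, 'a, 'z) clac_sig_scheme"
  assumes clac: "is_clac X"
begin

abbreviation "Ob \<equiv> cOb X"
abbreviation "Hom \<equiv> cHom X"
abbreviation "cmp \<equiv> cComp X"
abbreviation "idn \<equiv> cId X"
abbreviation "p0 \<equiv> cPi0 X"
abbreviation "p1 \<equiv> cPi1 X"
abbreviation "pair \<equiv> cPair X"
abbreviation "PO \<equiv> Pn_obj X"
abbreviation "PA \<equiv> Pn_arr X"
abbreviation "PP \<equiv> Pobj X"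

lemma cat: "is_category X" and fp: "has_finite_products X" and la: "is_left_additive X"
  using clac by (auto simp: is_clac_def)

lemma dom_ob: "f \<in> Hom A B \<Longrightarrow> A \<in> Ob"
  using cat unfolding is_category_def by metis
lemma cod_ob: "f \<in> Hom A B \<Longrightarrow> B \<in> Ob"
  using cat unfolding is_category_def by metis
lemma hom_uniq: "f \<in> Hom A B \<Longrightarrow> f \<in> Hom A' B' \<Longrightarrow> A = A' \<and> B = B'"
  using cat unfolding is_category_def by metis
lemma id_hom[intro]: "A \<in> Ob \<Longrightarrow> idn A \<in> Hom A A"
  using cat unfolding is_category_def by metis
lemma comp_hom[intro]: "f \<in> Hom A B \<Longrightarrow> g \<in> Hom B C \<Longrightarrow> cmp A B C f g \<in> Hom A C"
  using cat unfolding is_category_def by metis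
lemma id_l: "f \<in> Hom A B \<Longrightarrow> cmp A A B (idn A) f = f"
  using cat unfolding is_category_def by metis
lemma id_r: "f \<in> Hom A B \<Longrightarrow> cmp A B B f (idn B) = f"
  using cat unfolding is_category_def by metis
lemma assoc: "f \<in> Hom A B \<Longrightarrow> g \<in> Hom B C \<Longrightarrow> h \<in> Hom C D \<Longrightarrow>
   cmp A C D (cmp A B C f g) h = cmp A B D f (cmp B C D g h)"
  using cat unfolding is_category_def by metis

lemma pr_ob[intro]: "A \<in> Ob \<Longrightarrow> B \<in> Ob \<Longrightarrow> cProd X A B \<in> Ob"
  using fp unfolding has_finite_products_def by metis
lemma p0_hom[intro]: "A \<in> Ob \<Longrightarrow> B \<in> Ob \<Longrightarrow> p0 A B \<in> Hom (cProd X A B) A"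
  using fp unfolding has_finite_products_def by metis
lemma p1_hom[intro]: "A \<in> Ob \<Longrightarrow> B \<in> Ob \<Longrightarrow> p1 A B \<in> Hom (cProd X A B) B"
  using fp unfolding has_finite_products_def by metis
lemma pair_hom[intro]: "f \<in> Hom C A \<Longrightarrow> g \<in> Hom C B \<Longrightarrow> pair C A B f g \<in> Hom C (cProd X A B)"
  using fp unfolding has_finite_products_def by metis
lemma pair_p0: "f \<in> Hom C A \<Longrightarrow> g \<in> Hom C B \<Longrightarrow> cmp C (cProd X A B) A (pair C A B f g) (p0 A B) = f"
  using fp unfolding has_finite_products_def by metis
lemma pair_p1: "f \<in> Hom C A \<Longrightarrow> g \<in> Hom C B \<Longrightarrow> cmp C (cProd X A B) B (pair C A B f g) (p1 A B) = g"
  using fp unfolding has_finite_products_def by metis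
lemma pair_eta: "h \<in> Hom C (cProd X A B) \<Longrightarrow> A \<in> Ob \<Longrightarrow> B \<in> Ob \<Longrightarrow>
   pair C A B (cmp C (cProd X A B) A h (p0 A B)) (cmp C (cProd X A B) B h (p1 A B)) = h"
  using fp unfolding has_finite_products_def by metis
lemma term_ob: "cTerm X \<in> Ob" and bang_hom: "A \<in> Ob \<Longrightarrow> cBang X A \<in> Hom A (cTerm X)"
  and bang_uniq: "h \<in> Hom A (cTerm X) \<Longrightarrow> h = cBang X A"
  using fp unfolding has_finite_products_def by metis+

lemma pair_ext: "h \<in> Hom C (cProd X A B) \<Longrightarrow> A \<in> Ob \<Longrightarrow> B \<in> Ob \<Longrightarrow>
   cmp C (cProd X A B) A h (p0 A B) = f \<Longrightarrow> cmp C (cProd X A B) B h (p1 A B) = g \<Longrightarrow>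
   h = pair C A B f g"
  by (metis pair_eta)

lemma pair_comp: "h \<in> Hom D C \<Longrightarrow> f \<in> Hom C A \<Longrightarrow> g \<in> Hom C B \<Longrightarrow>
   cmp D C (cProd X A B) h (pair C A B f g) = pair D A B (cmp D C A h f) (cmp D C B h g)"
proof (rule pair_ext)
  assume h: "h \<in> Hom D C" and f: "f \<in> Hom C A" and g: "g \<in> Hom C B"
  have A: "A \<in> Ob" using f by (rule cod_ob)
  have B: "B \<in> Ob" using g by (rule cod_ob)
  show "cmp D C (cProd X A B) h (pair C A B f g) \<in> Hom D (cProd X A B)" using h f g by blast
  show "A \<in> Ob" "B \<in> Ob" by fact+
  show "cmp D (cProd X A B) A (cmp D C (cProd X A B) h (pair C A B f g)) (p0 A B) = cmp D C A h f"
    using assoc[OF h pair_hom[OF f g] p0_hom[OF A B]] pair_p0[OF f g] by simp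
  show "cmp D (cProd X A B) B (cmp D C (cProd X A B) h (pair C A B f g)) (p1 A B) = cmp D C B h g"
    using assoc[OF h pair_hom[OF f g] p1_hom[OF A B]] pair_p1[OF f g] by simp
qed

lemma add_hom[intro]: "f \<in> Hom A B \<Longrightarrow> g \<in> Hom A B \<Longrightarrow> cAdd X A B f g \<in> Hom A B"
  using la unfolding is_left_additive_def by metis
lemma zero_hom[intro]: "A \<in> Ob \<Longrightarrow> B \<in> Ob \<Longrightarrow> cZero X A B \<in> Hom A B"
  using la unfolding is_left_additive_def by metis


lemma add_assoc: "f \<in> Hom A B \<Longrightarrow> g \<in> Hom A B \<Longrightarrow> h \<in> Hom A B \<Longrightarrow>
   cAdd X A B (cAdd X A B f g) h = cAdd X A B f (cAdd X A B g h)"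
  using la unfolding is_left_additive_def by metis
lemma add_comm: "f \<in> Hom A B \<Longrightarrow> g \<in> Hom A B \<Longrightarrow> cAdd X A B f g = cAdd X A B g f"
  using la unfolding is_left_additive_def by metis
lemma add_zero: "f \<in> Hom A B \<Longrightarrow> cAdd X A B f (cZero X A B) = f"
  using la unfolding is_left_additive_def by metis
lemma comp_add: "f \<in> Hom A B \<Longrightarrow> g \<in> Hom B C \<Longrightarrow> h \<in> Hom B C \<Longrightarrow>
   cmp A B C f (cAdd X B C g h) = cAdd X A C (cmp A B C f g) (cmp A B C f h)"
  using la unfolding is_left_additive_def by metis
lemma comp_zero: "f \<in> Hom A B \<Longrightarrow> C \<in> Ob \<Longrightarrow> cmp A B C f (cZero X B C) = cZero X A C"
  using la unfolding is_left_additive_def by metis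
lemma p0_add: "A \<in> Ob \<Longrightarrow> B \<in> Ob \<Longrightarrow> f \<in> Hom C (cProd X A B) \<Longrightarrow> g \<in> Hom C (cProd X A B) \<Longrightarrow>
   cmp C (cProd X A B) A (cAdd X C (cProd X A B) f g) (p0 A B)
   = cAdd X C A (cmp C (cProd X A B) A f (p0 A B)) (cmp C (cProd X A B) A g (p0 A B))"
  using la unfolding is_left_additive_def by metis
lemma p1_add: "A \<in> Ob \<Longrightarrow> B \<in> Ob \<Longrightarrow> f \<in> Hom C (cProd X A B) \<Longrightarrow> g \<in> Hom C (cProd X A B) \<Longrightarrow>
   cmp C (cProd X A B) B (cAdd X C (cProd X A B) f g) (p1 A B)
   = cAdd X C B (cmp C (cProd X A B) B f (p1 A B)) (cmp C (cProd X A B) B g (p1 A B))"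
  using la unfolding is_left_additive_def by metis
lemma p0_zero: "C \<in> Ob \<Longrightarrow> A \<in> Ob \<Longrightarrow> B \<in> Ob \<Longrightarrow>
   cmp C (cProd X A B) A (cZero X C (cProd X A B)) (p0 A B) = cZero X C A"
  using la unfolding is_left_additive_def by metis
lemma p1_zero: "C \<in> Ob \<Longrightarrow> A \<in> Ob \<Longrightarrow> B \<in> Ob \<Longrightarrow>
   cmp C (cProd X A B) B (cZero X C (cProd X A B)) (p1 A B) = cZero X C B"
  using la unfolding is_left_additive_def by metis

end


lemma PO_0[simp]: "Pn_obj X 0 A = A" by (simp add: Pn_obj_def)
lemma PO_Suc: "Pn_obj X (Suc n) A = Pobj X (Pn_obj X n A)" by (simp add: Pn_obj_def)
lemma PP_PO[simp]: "Pobj X (Pn_obj X n A) = Pn_obj X (Suc n) A" by (simp add: Pn_obj_def)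
lemma PO_PP[simp]: "Pn_obj X n (Pobj X A) = Pn_obj X (Suc n) A" by (simp add: Pn_obj_def funpow_swap1)
lemma PO_add[simp]: "Pn_obj X m (Pn_obj X n A) = Pn_obj X (m+n) A" by (simp add: Pn_obj_def funpow_add)
lemma PO_1[simp]: "Pn_obj X (Suc 0) A = Pobj X A" by (simp add: Pn_obj_def)
lemma prodPP[simp]: "cProd X A A = Pobj X A" by (simp add: Pobj_def)

context clac begin

lemma PP_ob[intro]: "A \<in> Ob \<Longrightarrow> PP A \<in> Ob" using pr_ob[of A A] by simp
lemma PO_ob[intro]: "A \<in> Ob \<Longrightarrow> PO n A \<in> Ob"
proof (induction n)
  case 0 then show ?case by simp
next
  case (Suc n) then show ?case using PP_ob[of "PO n A"] by simp
qed
lemma p0P[intro]: "A \<in> Ob \<Longrightarrow> p0 A A \<in> Hom (PP A) A" using p0_hom[of A A] by simp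
lemma p1P[intro]: "A \<in> Ob \<Longrightarrow> p1 A A \<in> Hom (PP A) A" using p1_hom[of A A] by simp
lemma pairP[intro]: "f \<in> Hom C A \<Longrightarrow> g \<in> Hom C A \<Longrightarrow> pair C A A f g \<in> Hom C (PP A)"
  using pair_hom[of f C A g A] by simp
lemma pairP_p0: "f \<in> Hom C A \<Longrightarrow> g \<in> Hom C A \<Longrightarrow> cmp C (PP A) A (pair C A A f g) (p0 A A) = f"
  using pair_p0[of f C A g A] by simp
lemma pairP_p1: "f \<in> Hom C A \<Longrightarrow> g \<in> Hom C A \<Longrightarrow> cmp C (PP A) A (pair C A A f g) (p1 A A) = g"
  using pair_p1[of f C A g A] by simp
lemma pairP_comp: "h \<in> Hom D C \<Longrightarrow> f \<in> Hom C A \<Longrightarrow> g \<in> Hom C A \<Longrightarrow>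
   cmp D C (PP A) h (pair C A A f g) = pair D A A (cmp D C A h f) (cmp D C A h g)"
  using pair_comp[of h D C f A g A] by simp
lemma pairP_ext: "h \<in> Hom C (PP A) \<Longrightarrow> A \<in> Ob \<Longrightarrow>
   cmp C (PP A) A h (p0 A A) = f \<Longrightarrow> cmp C (PP A) A h (p1 A A) = g \<Longrightarrow> h = pair C A A f g"
  using pair_ext[of h C A A f g] by simp

lemma Parr_hom[intro]: "f \<in> Hom A B \<Longrightarrow> Parr X A B f \<in> Hom (PP A) (PP B)"
proof -
  assume f: "f \<in> Hom A B"
  have A: "A \<in> Ob" using f by (rule dom_ob)
  show ?thesis unfolding Parr_def using A f by (intro pairP comp_hom p0P p1P)
qed

lemma Parr_p0: "f \<in> Hom A B \<Longrightarrow> cmp (PP A) (PP B) B (Parr X A B f) (p0 B B) = cmp (PP A) A B (p0 A A) f"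
  unfolding Parr_def using dom_ob[of f A B] by (intro pairP_p0 comp_hom p0P p1P)
lemma Parr_p1: "f \<in> Hom A B \<Longrightarrow> cmp (PP A) (PP B) B (Parr X A B f) (p1 B B) = cmp (PP A) A B (p1 A A) f"
  unfolding Parr_def using dom_ob[of f A B] by (intro pairP_p1 comp_hom p0P p1P)

lemma Parr_comp:
  assumes f: "f \<in> Hom A B" and g: "g \<in> Hom B C"
  shows "Parr X A C (cmp A B C f g) = cmp (PP A) (PP B) (PP C) (Parr X A B f) (Parr X B C g)"
proof -
  have A: "A \<in> Ob" and B: "B \<in> Ob" using f by (auto intro: dom_ob cod_ob)
  have Pf: "Parr X A B f \<in> Hom (PP A) (PP B)" using f by blast
  have "cmp (PP A) (PP B) (PP C) (Parr X A B f) (Parr X B C g)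
     = pair (PP A) C C (cmp (PP A) (PP B) C (Parr X A B f) (cmp (PP B) B C (p0 B B) g))
                       (cmp (PP A) (PP B) C (Parr X A B f) (cmp (PP B) B C (p1 B B) g))"
    unfolding Parr_def[of X B C g] using Pf B g by (intro pairP_comp) auto
  also have "cmp (PP A) (PP B) C (Parr X A B f) (cmp (PP B) B C (p0 B B) g) = cmp (PP A) A C (p0 A A) (cmp A B C f g)"
    using assoc[OF Pf p0P[OF B] g, symmetric] Parr_p0[OF f] assoc[OF p0P[OF A] f g] by simp
  also have "cmp (PP A) (PP B) C (Parr X A B f) (cmp (PP B) B C (p1 B B) g) = cmp (PP A) A C (p1 A A) (cmp A B C f g)"
    using assoc[OF Pf p1P[OF B] g, symmetric] Parr_p1[OF f] assoc[OF p1P[OF A] f g] by simp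
  finally show ?thesis unfolding Parr_def by simp
qed

lemma Parr_id: "A \<in> Ob \<Longrightarrow> Parr X A A (idn A) = idn (PP A)"
proof -
  assume A: "A \<in> Ob"
  have "idn (PP A) = pair (PP A) A A (cmp (PP A) A A (p0 A A) (idn A)) (cmp (PP A) A A (p1 A A) (idn A))"
    apply (rule pairP_ext)
    using A id_l[OF p0P[OF A]] id_l[OF p1P[OF A]] id_r[OF p0P[OF A]] id_r[OF p1P[OF A]] by auto
  then show ?thesis unfolding Parr_def by simp
qed

lemma PA_0[simp]: "PA 0 A B f = f" by simp

lemma PA_hom[intro]: "f \<in> Hom A B \<Longrightarrow> PA n A B f \<in> Hom (PO n A) (PO n B)"
proof (induction n)
  case 0 then show ?case by simp
next
  case (Suc n) then show ?case using Parr_hom[of "PA n A B f" "PO n A" "PO n B"] by simp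
qed

lemma PA_comp: "f \<in> Hom A B \<Longrightarrow> g \<in> Hom B C \<Longrightarrow>
   PA n A C (cmp A B C f g) = cmp (PO n A) (PO n B) (PO n C) (PA n A B f) (PA n B C g)"
proof (induction n)
  case 0 then show ?case by simp
next
  case (Suc n)
  have "PA (Suc n) A C (cmp A B C f g) = Parr X (PO n A) (PO n C) (cmp (PO n A) (PO n B) (PO n C) (PA n A B f) (PA n B C g))"
    using Suc by simp
  also have "\<dots> = cmp (PO (Suc n) A) (PO (Suc n) B) (PO (Suc n) C) (PA (Suc n) A B f) (PA (Suc n) B C g)"
    using Parr_comp[OF PA_hom[OF Suc.prems(1)] PA_hom[OF Suc.prems(2)], of n] by simp
  finally show ?case .
qed

lemma PA_id: "A \<in> Ob \<Longrightarrow> PA n A A (idn A) = idn (PO n A)"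
proof (induction n)
  case 0 then show ?case by simp
next
  case (Suc n) then show ?case using Parr_id[of "PO n A"] by (simp add: PO_ob)
qed

lemma PA_add: "PA m (PO n A) (PO n B) (PA n A B f) = PA (m+n) A B f"
  by (induction m) simp_all

lemma PA_PP: "PA m (PP A) (PP B) (Parr X A B f) = PA (Suc m) A B f"
  using PA_add[of m "Suc 0" A B f] by simp

lemma I_hom[intro]: "A \<in> Ob \<Longrightarrow> Iseq X A n \<in> Hom (PO n A) A"
proof (induction n)
  case 0 then show ?case by auto
next
  case (Suc n)
  have "p1 (PO n A) (PO n A) \<in> Hom (PO (Suc n) A) (PO n A)" using p1P[of "PO n A"] Suc by (simp add: PO_ob)
  then show ?case using Suc by auto
qed

lemma I_nat: "f \<in> Hom A B \<Longrightarrow>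
   cmp (PO n A) (PO n B) B (PA n A B f) (Iseq X B n) = cmp (PO n A) A B (Iseq X A n) f"
proof (induction n)
  case 0 then show ?case by (simp add: id_l id_r)
next
  case (Suc n)
  have f: "f \<in> Hom A B" by fact
  have A: "A \<in> Ob" and B: "B \<in> Ob" using f by (auto intro: dom_ob cod_ob)
  let ?h = "PA n A B f"
  have h: "?h \<in> Hom (PO n A) (PO n B)" using f by blast
  have p1A: "p1 (PO n A) (PO n A) \<in> Hom (PO (Suc n) A) (PO n A)" using p1P[of "PO n A"] A by (simp add: PO_ob)
  have p1B: "p1 (PO n B) (PO n B) \<in> Hom (PO (Suc n) B) (PO n B)" using p1P[of "PO n B"] B by (simp add: PO_ob)
  have Ph: "Parr X (PO n A) (PO n B) ?h \<in> Hom (PO (Suc n) A) (PO (Suc n) B)" using Parr_hom[OF h] by simp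
  have "cmp (PO (Suc n) A) (PO (Suc n) B) B (PA (Suc n) A B f) (Iseq X B (Suc n))
      = cmp (PO (Suc n) A) (PO n B) B (cmp (PO (Suc n) A) (PO (Suc n) B) (PO n B) (Parr X (PO n A) (PO n B) ?h) (p1 (PO n B) (PO n B))) (Iseq X B n)"
    using assoc[OF Ph p1B I_hom[OF B], symmetric] by simp
  also have "\<dots> = cmp (PO (Suc n) A) (PO n B) B (cmp (PO (Suc n) A) (PO n A) (PO n B) (p1 (PO n A) (PO n A)) ?h) (Iseq X B n)"
    using Parr_p1[OF h] by simp
  also have "\<dots> = cmp (PO (Suc n) A) (PO n A) B (p1 (PO n A) (PO n A)) (cmp (PO n A) (PO n B) B ?h (Iseq X B n))"
    using assoc[OF p1A h I_hom[OF B]] by simp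
  also have "\<dots> = cmp (PO (Suc n) A) (PO n A) B (p1 (PO n A) (PO n A)) (cmp (PO n A) A B (Iseq X A n) f)"
    using Suc by simp
  also have "\<dots> = cmp (PO (Suc n) A) A B (Iseq X A (Suc n)) f"
    using assoc[OF p1A I_hom[OF A] f] by simp
  finally show ?case .
qed

lemma I_add: "A \<in> Ob \<Longrightarrow>
   Iseq X A (k+n) = cmp (PO (k+n) A) (PO n A) A (Iseq X (PO n A) k) (Iseq X A n)"
proof (induction k)
  case 0 then show ?case using id_l[OF I_hom] by simp
next
  case (Suc k)
  have A: "A \<in> Ob" by fact
  have p1: "p1 (PO (k+n) A) (PO (k+n) A) \<in> Hom (PO (Suc (k+n)) A) (PO (k+n) A)"
    using p1P[of "PO (k+n) A"] A by (simp add: PO_ob)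
  have "Iseq X A (Suc k + n) = cmp (PO (Suc (k+n)) A) (PO (k+n) A) A (p1 (PO (k+n) A) (PO (k+n) A))
       (cmp (PO (k+n) A) (PO n A) A (Iseq X (PO n A) k) (Iseq X A n))"
    using Suc by simp
  also have "\<dots> = cmp (PO (Suc k + n) A) (PO n A) A (Iseq X (PO n A) (Suc k)) (Iseq X A n)"
    using assoc[OF p1 _ I_hom[OF A], of "Iseq X (PO n A) k" n, symmetric] I_hom[of "PO n A" k] A
    by (simp add: PO_ob)
  finally show ?case .
qed

lemma I_1: "A \<in> Ob \<Longrightarrow> Iseq X A (Suc 0) = p1 A A"
  using id_r[OF p1P] by simp

lemma I_Suc': "A \<in> Ob \<Longrightarrow> Iseq X A (Suc k) = cmp (PO (Suc k) A) (PP A) A (Iseq X (PP A) k) (p1 A A)"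
  using I_add[of A k "Suc 0"] I_1[of A] by simp

end


definition DH :: "('o, 'a, 'z) clac_sig_scheme \<Rightarrow> 'o \<Rightarrow> 'o \<Rightarrow> (nat \<Rightarrow> 'a) set" where
  "DH X A B = {f. \<forall>n. f n \<in> cHom X (Pn_obj X n A) B}"
definition Dc :: "('o, 'a, 'z) clac_sig_scheme \<Rightarrow> 'o \<Rightarrow> 'o \<Rightarrow> 'o \<Rightarrow> (nat \<Rightarrow> 'a) \<Rightarrow> (nat \<Rightarrow> 'a) \<Rightarrow> nat \<Rightarrow> 'a" where
  "Dc X A B C f g = (\<lambda>n. cComp X (Pn_obj X n A) (Pn_obj X n B) C (Tn X n A B f 0) (g n))"
definition Lf :: "('o, 'a, 'z) clac_sig_scheme \<Rightarrow> 'o \<Rightarrow> 'o \<Rightarrow> 'a \<Rightarrow> nat \<Rightarrow> 'a" where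
  "Lf X A B h = (\<lambda>k. cComp X (Pn_obj X k A) A B (Iseq X A k) h)"

lemma DH_iff: "f \<in> DH X A B \<longleftrightarrow> (\<forall>n. f n \<in> cHom X (Pn_obj X n A) B)" by (simp add: DH_def)

lemma T_add: "Tn X m (Pn_obj X n A) (Pn_obj X n B) (Tn X n A B f) = Tn X (m+n) A B f"
  by (induction m) simp_all
lemma T_PP: "Tn X m (Pobj X A) (Pobj X B) (Tseq X A B f) = Tn X (Suc m) A B f"
  using T_add[of X m "Suc 0" A B f] by simp

context clac begin

lemma DH_ob: "f \<in> DH X A B \<Longrightarrow> A \<in> Ob \<and> B \<in> Ob"
proof -
  assume "f \<in> DH X A B"
  then have "f 0 \<in> Hom A B" by (simp add: DH_iff del: PO_0) (metis PO_0)
  then show ?thesis using dom_ob cod_ob by blast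
qed

lemma Ts_hom: assumes f: "f \<in> DH X A B" shows "Tseq X A B f \<in> DH X (PP A) (PP B)"
proof -
  have A: "A \<in> Ob" and B: "B \<in> Ob" using DH_ob[OF f] by auto
  { fix k
    have "PA k (PP A) A (p0 A A) \<in> Hom (PO (Suc k) A) (PO k A)" using PA_hom[OF p0P[OF A], of k] by simp
    moreover have "f k \<in> Hom (PO k A) B" "f (Suc k) \<in> Hom (PO (Suc k) A) B" using f by (auto simp: DH_iff)
    ultimately have "Tseq X A B f k \<in> Hom (PO (Suc k) A) (PP B)"
      unfolding Tseq_def by (simp add: pairP comp_hom) }
  then show ?thesis by (simp add: DH_iff)
qed

lemma Ts_p0: assumes f: "f \<in> DH X A B" shows
  "cmp (PO (Suc k) A) (PP B) B (Tseq X A B f k) (p0 B B) = cmp (PO (Suc k) A) (PO k A) B (PA k (PP A) A (p0 A A)) (f k)"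
proof -
  have A: "A \<in> Ob" and B: "B \<in> Ob" using DH_ob[OF f] by auto
  have "PA k (PP A) A (p0 A A) \<in> Hom (PO (Suc k) A) (PO k A)" using PA_hom[OF p0P[OF A], of k] by simp
  moreover have "f k \<in> Hom (PO k A) B" "f (Suc k) \<in> Hom (PO (Suc k) A) B" using f by (auto simp: DH_iff)
  ultimately show ?thesis unfolding Tseq_def by (simp add: pairP_p0 comp_hom)
qed

lemma Ts_p1: assumes f: "f \<in> DH X A B" shows
  "cmp (PO (Suc k) A) (PP B) B (Tseq X A B f k) (p1 B B) = f (Suc k)"
proof -
  have A: "A \<in> Ob" and B: "B \<in> Ob" using DH_ob[OF f] by auto
  have "PA k (PP A) A (p0 A A) \<in> Hom (PO (Suc k) A) (PO k A)" using PA_hom[OF p0P[OF A], of k] by simp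
  moreover have "f k \<in> Hom (PO k A) B" "f (Suc k) \<in> Hom (PO (Suc k) A) B" using f by (auto simp: DH_iff)
  ultimately show ?thesis unfolding Tseq_def by (simp add: pairP_p1 comp_hom)
qed

lemma T_hom: "f \<in> DH X A B \<Longrightarrow> Tn X n A B f \<in> DH X (PO n A) (PO n B)"
proof (induction n)
  case 0 then show ?case by simp
next
  case (Suc n) then show ?case using Ts_hom[of "Tn X n A B f" "PO n A" "PO n B"] by simp
qed

lemma T_hom': "f \<in> DH X A B \<Longrightarrow> Tn X n A B f k \<in> Hom (PO (k+n) A) (PO n B)"
  using T_hom[of f A B n] by (simp add: DH_iff)

lemma RI: "f \<in> DH X A B \<Longrightarrow> cmp (PO (k+m) A) (PO m B) B (Tn X m A B f k) (Iseq X B m) = f (k+m)"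
proof (induction m arbitrary: k)
  case 0 then show ?case using id_r[of "f k" "PO k A" B] by (simp add: DH_iff)
next
  case (Suc m)
  have f: "f \<in> DH X A B" by fact
  have B: "B \<in> Ob" using DH_ob[OF f] by auto
  let ?g = "Tn X m A B f"
  have g: "?g \<in> DH X (PO m A) (PO m B)" using T_hom[OF f] .
  have Ts: "Tseq X (PO m A) (PO m B) ?g k \<in> Hom (PO (Suc (k+m)) A) (PO (Suc m) B)"
    using Ts_hom[OF g] by (simp add: DH_iff)
  have p1: "p1 (PO m B) (PO m B) \<in> Hom (PO (Suc m) B) (PO m B)" using p1P[of "PO m B"] B by (simp add: PO_ob)
  have "cmp (PO (k + Suc m) A) (PO (Suc m) B) B (Tn X (Suc m) A B f k) (Iseq X B (Suc m))
      = cmp (PO (Suc (k+m)) A) (PO m B) B (cmp (PO (Suc (k+m)) A) (PO (Suc m) B) (PO m B) (Tseq X (PO m A) (PO m B) ?g k) (p1 (PO m B) (PO m B))) (Iseq X B m)"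
    using assoc[OF Ts p1 I_hom[OF B], symmetric] by simp
  also have "\<dots> = cmp (PO (Suc k + m) A) (PO m B) B (?g (Suc k)) (Iseq X B m)"
    using Ts_p1[OF g, of k] by simp
  also have "\<dots> = f (k + Suc m)" using Suc.IH[OF f, of "Suc k"] by simp
  finally show ?case .
qed

lemma Lf_hom: "h \<in> Hom A B \<Longrightarrow> Lf X A B h \<in> DH X A B"
  unfolding Lf_def DH_iff using I_hom dom_ob by blast

lemma Ts_L: assumes h: "h \<in> Hom A B" shows "Tseq X A B (Lf X A B h) = Lf X (PP A) (PP B) (Parr X A B h)"
proof
  fix k
  have A: "A \<in> Ob" and B: "B \<in> Ob" using h by (auto intro: dom_ob cod_ob)
  have IPA: "Iseq X (PP A) k \<in> Hom (PO (Suc k) A) (PP A)" using I_hom[of "PP A" k] A by (simp add: PP_ob)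
  have P0: "PA k (PP A) A (p0 A A) \<in> Hom (PO (Suc k) A) (PO k A)" using PA_hom[OF p0P[OF A], of k] by simp
  have e1: "cmp (PO (Suc k) A) (PO k A) B (PA k (PP A) A (p0 A A)) (cmp (PO k A) A B (Iseq X A k) h)
        = cmp (PO (Suc k) A) (PP A) B (Iseq X (PP A) k) (cmp (PP A) A B (p0 A A) h)"
    using assoc[OF P0 I_hom[OF A] h, symmetric] I_nat[OF p0P[OF A], of k] assoc[OF IPA p0P[OF A] h]
    by simp
  have e2: "cmp (PO (Suc k) A) A B (Iseq X A (Suc k)) h = cmp (PO (Suc k) A) (PP A) B (Iseq X (PP A) k) (cmp (PP A) A B (p1 A A) h)"
    using I_Suc'[OF A, of k] assoc[OF IPA p1P[OF A] h] by simp
  have "Lf X (PP A) (PP B) (Parr X A B h) k = pair (PO (Suc k) A) B B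
      (cmp (PO (Suc k) A) (PP A) B (Iseq X (PP A) k) (cmp (PP A) A B (p0 A A) h))
      (cmp (PO (Suc k) A) (PP A) B (Iseq X (PP A) k) (cmp (PP A) A B (p1 A A) h))"
    unfolding Lf_def Parr_def using IPA A h by (simp add: pairP_comp comp_hom p0P p1P)
  then show "Tseq X A B (Lf X A B h) k = Lf X (PP A) (PP B) (Parr X A B h) k"
    unfolding Tseq_def using e1 e2 by (simp add: Lf_def)
qed

lemma T_L: "h \<in> Hom A B \<Longrightarrow> Tn X n A B (Lf X A B h) = Lf X (PO n A) (PO n B) (PA n A B h)"
proof (induction n)
  case 0 then show ?case by simp
next
  case (Suc n) then show ?case using Ts_L[OF PA_hom[OF Suc.prems, of n]] by simp
qed

lemma T_L0: "h \<in> Hom A B \<Longrightarrow> Tn X n A B (Lf X A B h) 0 = PA n A B h"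
  using T_L[of h A B n] id_l[OF PA_hom[of h A B n]] by (simp add: Lf_def)

lemma I_L: "A \<in> Ob \<Longrightarrow> Iseq X A = Lf X A A (idn A)"
  using id_r[OF I_hom] by (auto simp: Lf_def)

lemma T_I0: "A \<in> Ob \<Longrightarrow> Tn X n A A (Iseq X A) 0 = idn (PO n A)"
  using T_L0[OF id_hom, of A n] PA_id[of A n] I_L[of A] by simp

lemma Dc_hom: "f \<in> DH X A B \<Longrightarrow> g \<in> DH X B C \<Longrightarrow> Dc X A B C f g \<in> DH X A C"
  unfolding Dc_def DH_iff using T_hom'[of f A B _ 0] by (simp add: comp_hom DH_iff)

lemma Dc_idl: "f \<in> DH X A B \<Longrightarrow> Dc X A A B (Iseq X A) f = f"
  unfolding Dc_def using T_I0 DH_ob id_l by (auto simp: DH_iff)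

lemma Dc_idr: "f \<in> DH X A B \<Longrightarrow> Dc X A B B f (Iseq X B) = f"
  unfolding Dc_def using RI[of f A B 0] by auto

end


context clac begin

lemma T_hom0: "f \<in> DH X A B \<Longrightarrow> Tn X n A B f 0 \<in> Hom (PO n A) (PO n B)"
  using T_hom'[of f A B n 0] by simp

lemma Ts_Parr:
  assumes g: "g \<in> DH X Y Y'" and h: "h \<in> Hom Y' Z"
  shows "cmp (PO (Suc j) Y) (PP Y') (PP Z) (Tseq X Y Y' g j) (Parr X Y' Z h)
    = pair (PO (Suc j) Y) Z Z (cmp (PO (Suc j) Y) (PO j Y) Z (PA j (PP Y) Y (p0 Y Y)) (cmp (PO j Y) Y' Z (g j) h))
        (cmp (PO (Suc j) Y) Y' Z (g (Suc j)) h)"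
proof -
  have Y: "Y \<in> Ob" and Y': "Y' \<in> Ob" using DH_ob[OF g] by auto
  have Ts: "Tseq X Y Y' g j \<in> Hom (PO (Suc j) Y) (PP Y')" using Ts_hom[OF g] by (simp add: DH_iff)
  have P0: "PA j (PP Y) Y (p0 Y Y) \<in> Hom (PO (Suc j) Y) (PO j Y)" using PA_hom[OF p0P[OF Y], of j] by simp
  have gj: "g j \<in> Hom (PO j Y) Y'" using g by (simp add: DH_iff)
  have "cmp (PO (Suc j) Y) (PP Y') (PP Z) (Tseq X Y Y' g j) (Parr X Y' Z h)
     = pair (PO (Suc j) Y) Z Z (cmp (PO (Suc j) Y) (PP Y') Z (Tseq X Y Y' g j) (cmp (PP Y') Y' Z (p0 Y' Y') h))
          (cmp (PO (Suc j) Y) (PP Y') Z (Tseq X Y Y' g j) (cmp (PP Y') Y' Z (p1 Y' Y') h))"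
    unfolding Parr_def[of X Y' Z h] using Ts h Y' by (simp add: pairP_comp comp_hom p0P p1P)
  also have "cmp (PO (Suc j) Y) (PP Y') Z (Tseq X Y Y' g j) (cmp (PP Y') Y' Z (p0 Y' Y') h)
     = cmp (PO (Suc j) Y) (PO j Y) Z (PA j (PP Y) Y (p0 Y Y)) (cmp (PO j Y) Y' Z (g j) h)"
    using assoc[OF Ts p0P[OF Y'] h, symmetric] Ts_p0[OF g, of j] assoc[OF P0 gj h] by simp
  also have "cmp (PO (Suc j) Y) (PP Y') Z (Tseq X Y Y' g j) (cmp (PP Y') Y' Z (p1 Y' Y') h)
     = cmp (PO (Suc j) Y) Y' Z (g (Suc j)) h"
    using assoc[OF Ts p1P[OF Y'] h, symmetric] Ts_p1[OF g, of j] by simp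
  finally show ?thesis .
qed

lemma COMM:
  assumes A: "A \<in> Ob"
  shows "cmp (PO (Suc (Suc (j+k))) A) (PO (Suc (j+k)) A) (PO (j+k) A)
      (PA j (PO (Suc (Suc k)) A) (PO (Suc k) A) (p0 (PO (Suc k) A) (PO (Suc k) A))) (PA (j+k) (PP A) A (p0 A A))
    = cmp (PO (Suc (Suc (j+k))) A) (PO (Suc (j+k)) A) (PO (j+k) A)
      (PA (Suc (j+k)) (PP A) A (p0 A A)) (PA j (PO (Suc k) A) (PO k A) (p0 (PO k A) (PO k A)))"
proof -
  let ?q = "PA k (PP A) A (p0 A A)"
  have q: "?q \<in> Hom (PO (Suc k) A) (PO k A)" using PA_hom[OF p0P[OF A], of k] by simp
  have p0a: "p0 (PO (Suc k) A) (PO (Suc k) A) \<in> Hom (PO (Suc (Suc k)) A) (PO (Suc k) A)"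
    using p0P[of "PO (Suc k) A"] A by (simp add: PO_ob)
  have p0b: "p0 (PO k A) (PO k A) \<in> Hom (PO (Suc k) A) (PO k A)"
    using p0P[of "PO k A"] A by (simp add: PO_ob)
  have Pq: "Parr X (PO (Suc k) A) (PO k A) ?q \<in> Hom (PO (Suc (Suc k)) A) (PO (Suc k) A)"
    using Parr_hom[OF q] by simp
  have e1: "PA (j+k) (PP A) A (p0 A A) = PA j (PO (Suc k) A) (PO k A) ?q"
    using PA_add[of j k "PP A" A "p0 A A"] by simp
  have e2: "PA (Suc (j+k)) (PP A) A (p0 A A) = PA j (PO (Suc (Suc k)) A) (PO (Suc k) A) (Parr X (PO (Suc k) A) (PO k A) ?q)"
    using PA_add[of j "Suc k" "PP A" A "p0 A A"] by simp
  have "cmp (PO (Suc (Suc (j+k))) A) (PO (Suc (j+k)) A) (PO (j+k) A)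
      (PA j (PO (Suc (Suc k)) A) (PO (Suc k) A) (p0 (PO (Suc k) A) (PO (Suc k) A))) (PA (j+k) (PP A) A (p0 A A))
     = PA j (PO (Suc (Suc k)) A) (PO k A) (cmp (PO (Suc (Suc k)) A) (PO (Suc k) A) (PO k A) (p0 (PO (Suc k) A) (PO (Suc k) A)) ?q)"
    using PA_comp[OF p0a q, of j] e1 by simp
  also have "cmp (PO (Suc (Suc k)) A) (PO (Suc k) A) (PO k A) (p0 (PO (Suc k) A) (PO (Suc k) A)) ?q
      = cmp (PO (Suc (Suc k)) A) (PO (Suc k) A) (PO k A) (Parr X (PO (Suc k) A) (PO k A) ?q) (p0 (PO k A) (PO k A))"
    using Parr_p0[OF q] by simp
  also have "PA j (PO (Suc (Suc k)) A) (PO k A) (cmp (PO (Suc (Suc k)) A) (PO (Suc k) A) (PO k A) (Parr X (PO (Suc k) A) (PO k A) ?q) (p0 (PO k A) (PO k A)))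
     = cmp (PO (Suc (Suc (j+k))) A) (PO (Suc (j+k)) A) (PO (j+k) A)
      (PA (Suc (j+k)) (PP A) A (p0 A A)) (PA j (PO (Suc k) A) (PO k A) (p0 (PO k A) (PO k A)))"
    using PA_comp[OF Pq p0b, of j] e2 by simp
  finally show ?thesis .
qed

lemma KEY:
  assumes f: "f \<in> DH X A B"
  shows "cmp (PO (Suc (j+k)) A) (PO (Suc k) B) (PO k B) (Tn X k (PP A) (PP B) (Tseq X A B f) j) (PA k (PP B) B (p0 B B))
       = cmp (PO (Suc (j+k)) A) (PO (j+k) A) (PO k B) (PA (j+k) (PP A) A (p0 A A)) (Tn X k A B f j)"
  using f
proof (induction k arbitrary: j)
  case 0 then show ?case using Ts_p0[OF f, of j] by simp
next
  case (Suc k)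
  have A: "A \<in> Ob" and B: "B \<in> Ob" using DH_ob[OF f] by auto
  let ?g = "Tn X k (PP A) (PP B) (Tseq X A B f)"
  have g: "?g \<in> DH X (PO (Suc k) A) (PO (Suc k) B)" using T_hom[OF Ts_hom[OF f], of k] by simp
  let ?h = "PA k (PP B) B (p0 B B)"
  have h: "?h \<in> Hom (PO (Suc k) B) (PO k B)" using PA_hom[OF p0P[OF B], of k] by simp
  let ?t = "Tn X k A B f"
  have t: "?t \<in> DH X (PO k A) (PO k B)" using T_hom[OF f] .
  have tj: "?t j \<in> Hom (PO (j+k) A) (PO k B)" using t by (simp add: DH_iff)
  have tSj: "?t (Suc j) \<in> Hom (PO (Suc (j+k)) A) (PO k B)" using T_hom'[OF f, of k "Suc j"] by simp
  have P0a: "PA (Suc (j+k)) (PP A) A (p0 A A) \<in> Hom (PO (Suc (Suc (j+k))) A) (PO (Suc (j+k)) A)"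
    using PA_hom[OF p0P[OF A], of "Suc (j+k)"] by simp
  have P0b: "PA (j+k) (PP A) A (p0 A A) \<in> Hom (PO (Suc (j+k)) A) (PO (j+k) A)"
    using PA_hom[OF p0P[OF A], of "j+k"] by simp
  have P0c: "PA j (PO (Suc (Suc k)) A) (PO (Suc k) A) (p0 (PO (Suc k) A) (PO (Suc k) A)) \<in> Hom (PO (Suc (Suc (j+k))) A) (PO (Suc (j+k)) A)"
    using PA_hom[OF p0P[of "PO (Suc k) A"], of j] A by (simp add: PO_ob)
  have P0d: "PA j (PO (Suc k) A) (PO k A) (p0 (PO k A) (PO k A)) \<in> Hom (PO (Suc (j+k)) A) (PO (j+k) A)"
    using PA_hom[OF p0P[of "PO k A"], of j] A by (simp add: PO_ob)
  have "cmp (PO (Suc (j + Suc k)) A) (PO (Suc (Suc k)) B) (PO (Suc k) B) (Tn X (Suc k) (PP A) (PP B) (Tseq X A B f) j) (PA (Suc k) (PP B) B (p0 B B))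
     = cmp (PO (Suc (Suc (j+k))) A) (PP (PO (Suc k) B)) (PP (PO k B)) (Tseq X (PO (Suc k) A) (PO (Suc k) B) ?g j) (Parr X (PO (Suc k) B) (PO k B) ?h)"
    by simp
  also have "\<dots> = pair (PO (Suc (Suc (j+k))) A) (PO k B) (PO k B)
       (cmp (PO (Suc (Suc (j+k))) A) (PO (Suc (j+k)) A) (PO k B) (PA j (PO (Suc (Suc k)) A) (PO (Suc k) A) (p0 (PO (Suc k) A) (PO (Suc k) A)))
          (cmp (PO (Suc (j+k)) A) (PO (j+k) A) (PO k B) (PA (j+k) (PP A) A (p0 A A)) (?t j)))
       (cmp (PO (Suc (Suc (j+k))) A) (PO (Suc (j+k)) A) (PO k B) (PA (Suc (j+k)) (PP A) A (p0 A A)) (?t (Suc j)))"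
    using Ts_Parr[OF g h, of j] Suc.IH[OF f, of j] Suc.IH[OF f, of "Suc j"] by simp
  also have "cmp (PO (Suc (Suc (j+k))) A) (PO (Suc (j+k)) A) (PO k B) (PA j (PO (Suc (Suc k)) A) (PO (Suc k) A) (p0 (PO (Suc k) A) (PO (Suc k) A)))
          (cmp (PO (Suc (j+k)) A) (PO (j+k) A) (PO k B) (PA (j+k) (PP A) A (p0 A A)) (?t j))
     = cmp (PO (Suc (Suc (j+k))) A) (PO (Suc (j+k)) A) (PO k B) (PA (Suc (j+k)) (PP A) A (p0 A A))
          (cmp (PO (Suc (j+k)) A) (PO (j+k) A) (PO k B) (PA j (PO (Suc k) A) (PO k A) (p0 (PO k A) (PO k A))) (?t j))"
    using assoc[OF P0c P0b tj, symmetric] COMM[OF A, of j k] assoc[OF P0a P0d tj] by simp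
  also have "pair (PO (Suc (Suc (j+k))) A) (PO k B) (PO k B)
       (cmp (PO (Suc (Suc (j+k))) A) (PO (Suc (j+k)) A) (PO k B) (PA (Suc (j+k)) (PP A) A (p0 A A))
          (cmp (PO (Suc (j+k)) A) (PO (j+k) A) (PO k B) (PA j (PO (Suc k) A) (PO k A) (p0 (PO k A) (PO k A))) (?t j)))
       (cmp (PO (Suc (Suc (j+k))) A) (PO (Suc (j+k)) A) (PO k B) (PA (Suc (j+k)) (PP A) A (p0 A A)) (?t (Suc j)))
     = cmp (PO (Suc (Suc (j+k))) A) (PO (Suc (j+k)) A) (PO (Suc k) B) (PA (Suc (j+k)) (PP A) A (p0 A A))
         (Tseq X (PO k A) (PO k B) ?t j)"
    unfolding Tseq_def using pairP_comp[OF P0a comp_hom[OF P0d tj] tSj] by simp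
  finally show ?case by simp
qed

lemma KEY0:
  assumes f: "f \<in> DH X A B"
  shows "cmp (PO (Suc k) A) (PO (Suc k) B) (PO k B) (Tn X (Suc k) A B f 0) (PA k (PP B) B (p0 B B))
       = cmp (PO (Suc k) A) (PO k A) (PO k B) (PA k (PP A) A (p0 A A)) (Tn X k A B f 0)"
  using KEY[OF f, of 0 k] T_PP[of X k A B f] by simp

lemma Ts_comp:
  assumes f: "f \<in> DH X A B" and g: "g \<in> DH X B C"
  shows "Tseq X A C (Dc X A B C f g) = Dc X (PP A) (PP B) (PP C) (Tseq X A B f) (Tseq X B C g)"
proof
  fix k
  have A: "A \<in> Ob" and B: "B \<in> Ob" and C: "C \<in> Ob" using DH_ob[OF f] DH_ob[OF g] by auto
  have T1: "Tn X (Suc k) A B f 0 \<in> Hom (PO (Suc k) A) (PO (Suc k) B)" using T_hom'[OF f, of "Suc k" 0] by simp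
  have T0: "Tn X k A B f 0 \<in> Hom (PO k A) (PO k B)" using T_hom'[OF f, of k 0] by simp
  have P0A: "PA k (PP A) A (p0 A A) \<in> Hom (PO (Suc k) A) (PO k A)" using PA_hom[OF p0P[OF A], of k] by simp
  have P0B: "PA k (PP B) B (p0 B B) \<in> Hom (PO (Suc k) B) (PO k B)" using PA_hom[OF p0P[OF B], of k] by simp
  have gk: "g k \<in> Hom (PO k B) C" and gSk: "g (Suc k) \<in> Hom (PO (Suc k) B) C" using g by (auto simp: DH_iff)
  have "Dc X (PP A) (PP B) (PP C) (Tseq X A B f) (Tseq X B C g) k
      = cmp (PO (Suc k) A) (PO (Suc k) B) (PP C) (Tn X (Suc k) A B f 0) (Tseq X B C g k)"
    unfolding Dc_def using T_PP[of X k A B f] by simp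
  also have "\<dots> = pair (PO (Suc k) A) C C
      (cmp (PO (Suc k) A) (PO (Suc k) B) C (Tn X (Suc k) A B f 0) (cmp (PO (Suc k) B) (PO k B) C (PA k (PP B) B (p0 B B)) (g k)))
      (cmp (PO (Suc k) A) (PO (Suc k) B) C (Tn X (Suc k) A B f 0) (g (Suc k)))"
    unfolding Tseq_def using pairP_comp[OF T1 comp_hom[OF P0B gk] gSk] by simp
  also have "cmp (PO (Suc k) A) (PO (Suc k) B) C (Tn X (Suc k) A B f 0) (cmp (PO (Suc k) B) (PO k B) C (PA k (PP B) B (p0 B B)) (g k))
     = cmp (PO (Suc k) A) (PO k A) C (PA k (PP A) A (p0 A A)) (cmp (PO k A) (PO k B) C (Tn X k A B f 0) (g k))"
    using assoc[OF T1 P0B gk, symmetric] KEY0[OF f, of k] assoc[OF P0A T0 gk] by simp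
  finally show "Tseq X A C (Dc X A B C f g) k = Dc X (PP A) (PP B) (PP C) (Tseq X A B f) (Tseq X B C g) k"
    unfolding Tseq_def Dc_def by simp
qed

lemma T_comp:
  "f \<in> DH X A B \<Longrightarrow> g \<in> DH X B C \<Longrightarrow>
   Tn X n A C (Dc X A B C f g) = Dc X (PO n A) (PO n B) (PO n C) (Tn X n A B f) (Tn X n B C g)"
proof (induction n)
  case 0 then show ?case by simp
next
  case (Suc n)
  then show ?case using Ts_comp[OF T_hom[OF Suc.prems(1)] T_hom[OF Suc.prems(2)], of n] by simp
qed

lemma Dc_assoc:
  assumes f: "f \<in> DH X A B" and g: "g \<in> DH X B C" and h: "h \<in> DH X C D"
  shows "Dc X A C D (Dc X A B C f g) h = Dc X A B D f (Dc X B C D g h)"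
proof
  fix n
  have "Tn X n A C (Dc X A B C f g) 0 = cmp (PO n A) (PO n B) (PO n C) (Tn X n A B f 0) (Tn X n B C g 0)"
    using T_comp[OF f g, of n] by (simp add: Dc_def)
  then show "Dc X A C D (Dc X A B C f g) h n = Dc X A B D f (Dc X B C D g h) n"
    unfolding Dc_def using assoc[OF T_hom0[OF f, of n] T_hom0[OF g, of n]] h
    by (simp add: DH_iff)
qed

end


lemma Dbar_simps:
  "cOb (Dbar X) = cOb X"
  "cHom (Dbar X) A B = DH X A B"
  "cId (Dbar X) = Iseq X"
  "cComp (Dbar X) = Dc X"
  "cProd (Dbar X) = cProd X"
  "cPi0 (Dbar X) A B = Lf X (cProd X A B) A (cPi0 X A B)"
  "cPi1 (Dbar X) A B = Lf X (cProd X A B) B (cPi1 X A B)"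
  "cPair (Dbar X) C A B f g = (\<lambda>n. cPair X (Pn_obj X n C) A B (f n) (g n))"
  "cTerm (Dbar X) = cTerm X"
  "cBang (Dbar X) A = (\<lambda>n. cBang X (Pn_obj X n A))"
  "cAdd (Dbar X) A B f g = (\<lambda>n. cAdd X (Pn_obj X n A) B (f n) (g n))"
  "cZero (Dbar X) A B = (\<lambda>n. cZero X (Pn_obj X n A) B)"
  by (auto simp: Dbar_def DH_def Dc_def Lf_def fun_eq_iff)

context clac begin

lemma Dc_Lf: assumes F: "F \<in> DH X A B" and h: "h \<in> Hom B C"
  shows "Dc X A B C F (Lf X B C h) = (\<lambda>n. cmp (PO n A) B C (F n) h)"
proof
  fix n
  have B: "B \<in> Ob" using h by (rule dom_ob)
  show "Dc X A B C F (Lf X B C h) n = cmp (PO n A) B C (F n) h"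
    unfolding Dc_def Lf_def
    using assoc[OF T_hom0[OF F, of n] I_hom[OF B, of n] h, symmetric] RI[OF F, of 0 n] by simp
qed

lemma Dbar_cat: "is_category (Dbar X)"
  unfolding is_category_def Dbar_simps
proof (intro conjI allI impI ballI)
  fix A B f assume "f \<in> DH X A B" then show "A \<in> cOb X" "B \<in> cOb X" using DH_ob by auto
next
  fix A B A' B' f assume "f \<in> DH X A B" "f \<in> DH X A' B'"
  then have "f 0 \<in> Hom A B" "f 0 \<in> Hom A' B'" by (simp_all add: DH_iff del: PO_0, metis PO_0, metis PO_0)
  then show "A = A'" "B = B'" using hom_uniq by blast+
next
  fix A assume "A \<in> cOb X" then show "Iseq X A \<in> DH X A A" using I_hom by (simp add: DH_iff)
next
  fix A B C f g assume "f \<in> DH X A B" "g \<in> DH X B C" then show "Dc X A B C f g \<in> DH X A C" by (rule Dc_hom)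
next
  fix A B f assume "f \<in> DH X A B" then show "Dc X A A B (Iseq X A) f = f" "Dc X A B B f (Iseq X B) = f"
    by (simp_all add: Dc_idl Dc_idr)
next
  fix A B C D f g h assume "f \<in> DH X A B" "g \<in> DH X B C" "h \<in> DH X C D"
  then show "Dc X A C D (Dc X A B C f g) h = Dc X A B D f (Dc X B C D g h)" by (rule Dc_assoc)
qed

lemma Dbar_fp: "has_finite_products (Dbar X)"
  unfolding has_finite_products_def Dbar_simps
proof (intro conjI allI impI ballI)
  fix A B assume A: "A \<in> cOb X" and B: "B \<in> cOb X"
  show "cProd X A B \<in> cOb X" using A B by blast
  show "Lf X (cProd X A B) A (p0 A B) \<in> DH X (cProd X A B) A" using A B by (intro Lf_hom) blast
  show "Lf X (cProd X A B) B (p1 A B) \<in> DH X (cProd X A B) B" using A B by (intro Lf_hom) blast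
next
  fix C A B f g assume f: "f \<in> DH X C A" and g: "g \<in> DH X C B"
  have A: "A \<in> Ob" and B: "B \<in> Ob" using DH_ob f g by auto
  have fn: "\<And>n. f n \<in> Hom (PO n C) A" and gn: "\<And>n. g n \<in> Hom (PO n C) B" using f g by (auto simp: DH_iff)
  show pd: "(\<lambda>n. pair (PO n C) A B (f n) (g n)) \<in> DH X C (cProd X A B)"
    using fn gn by (simp add: DH_iff pair_hom)
  show "Dc X C (cProd X A B) A (\<lambda>n. pair (PO n C) A B (f n) (g n)) (Lf X (cProd X A B) A (p0 A B)) = f"
    using Dc_Lf[OF pd p0_hom[OF A B]] pair_p0[OF fn gn] by simp
  show "Dc X C (cProd X A B) B (\<lambda>n. pair (PO n C) A B (f n) (g n)) (Lf X (cProd X A B) B (p1 A B)) = g"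
    using Dc_Lf[OF pd p1_hom[OF A B]] pair_p1[OF fn gn] by simp
next
  fix C A B h assume A: "A \<in> cOb X" and B: "B \<in> cOb X" and h: "h \<in> DH X C (cProd X A B)"
  have hn: "\<And>n. h n \<in> Hom (PO n C) (cProd X A B)" using h by (auto simp: DH_iff)
  show "(\<lambda>n. pair (PO n C) A B (Dc X C (cProd X A B) A h (Lf X (cProd X A B) A (p0 A B)) n)
             (Dc X C (cProd X A B) B h (Lf X (cProd X A B) B (p1 A B)) n)) = h"
    using Dc_Lf[OF h p0_hom[OF A B]] Dc_Lf[OF h p1_hom[OF A B]] pair_eta[OF hn A B] by simp
next
  show "cTerm X \<in> cOb X" by (rule term_ob)
next
  fix A assume "A \<in> cOb X" then show "(\<lambda>n. cBang X (PO n A)) \<in> DH X A (cTerm X)"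
    by (simp add: DH_iff bang_hom PO_ob)
next
  fix A h assume "h \<in> DH X A (cTerm X)" then show "h = (\<lambda>n. cBang X (PO n A))"
    by (auto simp: DH_iff fun_eq_iff intro: bang_uniq)
qed

lemma Dbar_la: "is_left_additive (Dbar X)"
  unfolding is_left_additive_def Dbar_simps
proof (intro conjI allI impI ballI)
  fix A B f g assume "f \<in> DH X A B" "g \<in> DH X A B"
  then show "(\<lambda>n. cAdd X (PO n A) B (f n) (g n)) \<in> DH X A B" by (simp add: DH_iff add_hom)
next
  fix A B assume "A \<in> cOb X" "B \<in> cOb X"
  then show "(\<lambda>n. cZero X (PO n A) B) \<in> DH X A B" by (simp add: DH_iff zero_hom PO_ob)
next
  fix A B f g h assume "f \<in> DH X A B" "g \<in> DH X A B" "h \<in> DH X A B"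
  then show "(\<lambda>n. cAdd X (PO n A) B (cAdd X (PO n A) B (f n) (g n)) (h n)) = (\<lambda>n. cAdd X (PO n A) B (f n) (cAdd X (PO n A) B (g n) (h n)))"
    by (simp add: DH_iff add_assoc)
next
  fix A B f g assume "f \<in> DH X A B" "g \<in> DH X A B"
  then show "(\<lambda>n. cAdd X (PO n A) B (f n) (g n)) = (\<lambda>n. cAdd X (PO n A) B (g n) (f n))"
    by (simp add: DH_iff add_comm)
next
  fix A B f assume "f \<in> DH X A B"
  then show "(\<lambda>n. cAdd X (PO n A) B (f n) (cZero X (PO n A) B)) = f"
    by (simp add: DH_iff add_zero)
next
  fix A B C f g h assume f: "f \<in> DH X A B" and "g \<in> DH X B C" "h \<in> DH X B C"
  then show "Dc X A B C f (\<lambda>n. cAdd X (PO n B) C (g n) (h n)) = (\<lambda>n. cAdd X (PO n A) C (Dc X A B C f g n) (Dc X A B C f h n))"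
    unfolding Dc_def using T_hom0[OF f] by (simp add: DH_iff comp_add)
next
  fix A B C f assume f: "f \<in> DH X A B" and "C \<in> cOb X"
  then show "Dc X A B C f (\<lambda>n. cZero X (PO n B) C) = (\<lambda>n. cZero X (PO n A) C)"
    unfolding Dc_def using T_hom0[OF f] by (simp add: comp_zero)
next
  fix C A B f g assume A: "A \<in> cOb X" and B: "B \<in> cOb X" and f: "f \<in> DH X C (cProd X A B)" and g: "g \<in> DH X C (cProd X A B)"
  have fg: "(\<lambda>n. cAdd X (PO n C) (cProd X A B) (f n) (g n)) \<in> DH X C (cProd X A B)"
    using f g by (simp add: DH_iff add_hom)
  have fn: "\<And>n. f n \<in> Hom (PO n C) (cProd X A B)" and gn: "\<And>n. g n \<in> Hom (PO n C) (cProd X A B)" using f g by (auto simp: DH_iff)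
  show "Dc X C (cProd X A B) A (\<lambda>n. cAdd X (PO n C) (cProd X A B) (f n) (g n)) (Lf X (cProd X A B) A (p0 A B)) =
       (\<lambda>n. cAdd X (PO n C) A (Dc X C (cProd X A B) A f (Lf X (cProd X A B) A (p0 A B)) n) (Dc X C (cProd X A B) A g (Lf X (cProd X A B) A (p0 A B)) n))"
    using Dc_Lf[OF fg p0_hom[OF A B]] Dc_Lf[OF f p0_hom[OF A B]] Dc_Lf[OF g p0_hom[OF A B]] p0_add[OF A B fn gn] by simp
  show "Dc X C (cProd X A B) B (\<lambda>n. cAdd X (PO n C) (cProd X A B) (f n) (g n)) (Lf X (cProd X A B) B (p1 A B)) =
       (\<lambda>n. cAdd X (PO n C) B (Dc X C (cProd X A B) B f (Lf X (cProd X A B) B (p1 A B)) n) (Dc X C (cProd X A B) B g (Lf X (cProd X A B) B (p1 A B)) n))"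
    using Dc_Lf[OF fg p1_hom[OF A B]] Dc_Lf[OF f p1_hom[OF A B]] Dc_Lf[OF g p1_hom[OF A B]] p1_add[OF A B fn gn] by simp
next
  fix C A B assume C: "C \<in> cOb X" and A: "A \<in> cOb X" and B: "B \<in> cOb X"
  have z: "(\<lambda>n. cZero X (PO n C) (cProd X A B)) \<in> DH X C (cProd X A B)"
    using A B C by (simp add: DH_iff zero_hom PO_ob pr_ob)
  show "Dc X C (cProd X A B) A (\<lambda>n. cZero X (PO n C) (cProd X A B)) (Lf X (cProd X A B) A (p0 A B)) = (\<lambda>n. cZero X (PO n C) A)"
    using Dc_Lf[OF z p0_hom[OF A B]] p0_zero[OF PO_ob[OF C] A B] by simp
  show "Dc X C (cProd X A B) B (\<lambda>n. cZero X (PO n C) (cProd X A B)) (Lf X (cProd X A B) B (p1 A B)) = (\<lambda>n. cZero X (PO n C) B)"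
    using Dc_Lf[OF z p1_hom[OF A B]] p1_zero[OF PO_ob[OF C] A B] by simp
qed

lemma Dbar_clac: "is_clac (Dbar X)"
  using Dbar_cat Dbar_fp Dbar_la by (simp add: is_clac_def)

end


definition del :: "(nat \<Rightarrow> 'a) \<Rightarrow> nat \<Rightarrow> nat \<Rightarrow> 'a" where
  "del f = (\<lambda>n k. f (k+n))"

lemma Dshift_pow: "(Dshift ^^ n) f = (\<lambda>k. f (k+n))"
  by (induction n) (simp_all add: Dshift_def)

lemma delta_snd: "snd delta_bar f = del f"
  by (simp add: delta_bar_def del_def Dshift_pow fun_eq_iff)

lemma Pobj_D[simp]: "Pobj (Dbar X) = Pobj X"
  by (simp add: fun_eq_iff Pobj_def Dbar_simps del: prodPP)
lemma PO_D[simp]: "Pn_obj (Dbar X) = Pn_obj X"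
  by (simp add: fun_eq_iff Pn_obj_def)

context clac begin

lemma Lf_comp: assumes a: "a \<in> Hom A B" and b: "b \<in> Hom B C"
  shows "Dc X A B C (Lf X A B a) (Lf X B C b) = Lf X A C (cmp A B C a b)"
proof
  fix n
  have A: "A \<in> Ob" and B: "B \<in> Ob" using a by (auto intro: dom_ob cod_ob)
  show "Dc X A B C (Lf X A B a) (Lf X B C b) n = Lf X A C (cmp A B C a b) n"
    unfolding Dc_def T_L0[OF a] unfolding Lf_def
    using assoc[OF PA_hom[OF a, of n] I_hom[OF B, of n] b, symmetric] I_nat[OF a, of n]
      assoc[OF I_hom[OF A, of n] a b] by simp
qed

lemma Lf_pair: assumes a: "a \<in> Hom C A" and b: "b \<in> Hom C B"
  shows "(\<lambda>n. pair (PO n C) A B (Lf X C A a n) (Lf X C B b n)) = Lf X C (cProd X A B) (pair C A B a b)"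
proof
  fix n
  have C: "C \<in> Ob" using a by (rule dom_ob)
  show "pair (PO n C) A B (Lf X C A a n) (Lf X C B b n) = Lf X C (cProd X A B) (pair C A B a b) n"
    unfolding Lf_def using pair_comp[OF I_hom[OF C, of n] a b] by simp
qed

lemma Parr_D_L: assumes h: "h \<in> Hom A B"
  shows "Parr (Dbar X) A B (Lf X A B h) = Lf X (PP A) (PP B) (Parr X A B h)"
proof -
  have A: "A \<in> Ob" and B: "B \<in> Ob" using h by (auto intro: dom_ob cod_ob)
  have "Parr (Dbar X) A B (Lf X A B h) = (\<lambda>n. pair (PO n (PP A)) B B
          (Lf X (PP A) B (cmp (PP A) A B (p0 A A) h) n) (Lf X (PP A) B (cmp (PP A) A B (p1 A A) h) n))"
    unfolding Parr_def Dbar_simps using Lf_comp[OF p0P[OF A] h] Lf_comp[OF p1P[OF A] h] by simp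
  also have "\<dots> = Lf X (PP A) (PP B) (Parr X A B h)"
    unfolding Parr_def using Lf_pair[OF comp_hom[OF p0P[OF A] h] comp_hom[OF p1P[OF A] h]] by simp
  finally show ?thesis .
qed

lemma PA_D_L: "h \<in> Hom A B \<Longrightarrow> Pn_arr (Dbar X) n A B (Lf X A B h) = Lf X (PO n A) (PO n B) (PA n A B h)"
proof (induction n)
  case 0 then show ?case by simp
next
  case (Suc n) then show ?case using Parr_D_L[OF PA_hom[OF Suc.prems, of n]] by simp
qed

lemma Dc_Lf_left: assumes q: "q \<in> Hom A B" and G: "G \<in> DH X B C"
  shows "Dc X A B C (Lf X A B q) G = (\<lambda>k. cmp (PO k A) (PO k B) C (PA k A B q) (G k))"
  unfolding Dc_def T_L0[OF q] ..

lemma I_D: "A \<in> Ob \<Longrightarrow> Iseq (Dbar X) A n = (\<lambda>k. Iseq X A (k+n))"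
proof (induction n)
  case 0 then show ?case by (simp add: Dbar_simps)
next
  case (Suc n)
  have A: "A \<in> Ob" by fact
  have p1: "p1 (PO n A) (PO n A) \<in> Hom (PO (Suc n) A) (PO n A)" using p1P[of "PO n A"] A by (simp add: PO_ob)
  have G: "(\<lambda>k. Iseq X A (k+n)) \<in> DH X (PO n A) A" using I_hom[OF A] by (simp add: DH_iff)
  have "Iseq (Dbar X) A (Suc n) = Dc X (PO (Suc n) A) (PO n A) A (Lf X (PO (Suc n) A) (PO n A) (p1 (PO n A) (PO n A))) (\<lambda>k. Iseq X A (k+n))"
    using Suc by (simp add: Dbar_simps)
  also have "\<dots> = (\<lambda>k. Iseq X A (k + Suc n))"
  proof
    fix k
    have IP: "Iseq X (PO n A) k \<in> Hom (PO (k+n) A) (PO n A)" using I_hom[of "PO n A" k] A by (simp add: PO_ob)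
    have IP': "Iseq X (PO (Suc n) A) k \<in> Hom (PO (Suc (k+n)) A) (PO (Suc n) A)" using I_hom[of "PO (Suc n) A" k] A by (simp add: PO_ob)
    have PAp: "PA k (PO (Suc n) A) (PO n A) (p1 (PO n A) (PO n A)) \<in> Hom (PO (Suc (k+n)) A) (PO (k+n) A)"
      using PA_hom[OF p1, of k] by simp
    have "Dc X (PO (Suc n) A) (PO n A) A (Lf X (PO (Suc n) A) (PO n A) (p1 (PO n A) (PO n A))) (\<lambda>k. Iseq X A (k+n)) k
       = cmp (PO (Suc (k+n)) A) (PO (k+n) A) A (PA k (PO (Suc n) A) (PO n A) (p1 (PO n A) (PO n A)))
            (cmp (PO (k+n) A) (PO n A) A (Iseq X (PO n A) k) (Iseq X A n))"
      using Dc_Lf_left[OF p1 G] I_add[OF A, of k n] by simp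
    also have "\<dots> = cmp (PO (Suc (k+n)) A) (PO (Suc n) A) A (Iseq X (PO (Suc n) A) k)
            (cmp (PO (Suc n) A) (PO n A) A (p1 (PO n A) (PO n A)) (Iseq X A n))"
      using assoc[OF PAp IP I_hom[OF A, of n], symmetric] I_nat[OF p1, of k]
        assoc[OF IP' p1 I_hom[OF A, of n]] by simp
    also have "\<dots> = Iseq X A (k + Suc n)"
      using I_add[OF A, of k "Suc n"] by simp
    finally show "Dc X (PO (Suc n) A) (PO n A) A (Lf X (PO (Suc n) A) (PO n A) (p1 (PO n A) (PO n A))) (\<lambda>k. Iseq X A (k+n)) k
       = Iseq X A (k + Suc n)" .
  qed
  finally show ?case .
qed

lemma del_hom: "f \<in> DH X A B \<Longrightarrow> del f \<in> DH (Dbar X) A B"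
  by (simp add: DH_iff del_def Dbar_simps)

lemma Ts_D: assumes f: "f \<in> DH X A B"
  shows "Tseq (Dbar X) A B (del f) = del (Tseq X A B f)"
proof (rule ext)+
  fix m k
  have A: "A \<in> Ob" using DH_ob[OF f] by auto
  have q: "PA m (PP A) A (p0 A A) \<in> Hom (PO (Suc m) A) (PO m A)" using PA_hom[OF p0P[OF A], of m] by simp
  have G: "(\<lambda>k. f (k+m)) \<in> DH X (PO m A) B" using f by (simp add: DH_iff)
  have "Tseq (Dbar X) A B (del f) m k = pair (PO (Suc (k+m)) A) B B
      (Dc X (PO (Suc m) A) (PO m A) B (Lf X (PO (Suc m) A) (PO m A) (PA m (PP A) A (p0 A A))) (\<lambda>k. f (k+m)) k)
      (f (Suc (k+m)))"
    unfolding Tseq_def by (simp add: Dbar_simps del_def PA_D_L[OF p0P[OF A]])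
  also have "\<dots> = del (Tseq X A B f) m k"
    unfolding Dc_Lf_left[OF q G] using PA_add[of k m "PP A" A "p0 A A"] by (simp add: del_def Tseq_def)
  finally show "Tseq (Dbar X) A B (del f) m k = del (Tseq X A B f) m k" .
qed

lemma T_D: "f \<in> DH X A B \<Longrightarrow> Tn (Dbar X) n A B (del f) = del (Tn X n A B f)"
proof (induction n)
  case 0 then show ?case by simp
next
  case (Suc n) then show ?case using Ts_D[OF T_hom[OF Suc.prems, of n]] by simp
qed

lemma Dc_D: assumes f: "f \<in> DH X A B" and g: "g \<in> DH X B C"
  shows "Dc (Dbar X) A B C (del f) (del g) = del (Dc X A B C f g)"
proof (rule ext)+
  fix n k
  have "Dc (Dbar X) A B C (del f) (del g) n k = Dc X (PO n A) (PO n B) C (Tn X n A B f) (\<lambda>k. g (k+n)) k"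
    unfolding Dc_def[of "Dbar X"] T_D[OF f] by (simp add: Dbar_simps del_def)
  also have "\<dots> = del (Dc X A B C f g) n k"
    by (simp add: Dc_def del_def T_add)
  finally show "Dc (Dbar X) A B C (del f) (del g) n k = del (Dc X A B C f g) n k" .
qed

lemma Lf_D: assumes A: "A \<in> Ob" and h: "h \<in> Hom A B"
  shows "Lf (Dbar X) A B (Lf X A B h) = del (Lf X A B h)"
proof
  fix n
  have G: "(\<lambda>k. Iseq X A (k+n)) \<in> DH X (PO n A) A" using I_hom[OF A] by (simp add: DH_iff)
  show "Lf (Dbar X) A B (Lf X A B h) n = del (Lf X A B h) n"
    unfolding Lf_def[of "Dbar X"] using Dc_Lf[OF G h] I_D[OF A, of n]
    by (simp add: Dbar_simps del_def Lf_def)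
qed

lemma delta_hom: "clac_hom (Dbar X) (Dbar (Dbar X)) delta_bar"
  unfolding clac_hom_def delta_snd
proof (intro conjI allI impI ballI)
  fix A assume "A \<in> cOb (Dbar X)" then show "fst delta_bar A \<in> cOb (Dbar (Dbar X))"
    by (simp add: delta_bar_def Dbar_simps)
next
  fix A B f assume "f \<in> cHom (Dbar X) A B" then show "del f \<in> cHom (Dbar (Dbar X)) (fst delta_bar A) (fst delta_bar B)"
    by (simp add: delta_bar_def Dbar_simps del_hom)
next
  fix A assume "A \<in> cOb (Dbar X)" then show "del (cId (Dbar X) A) = cId (Dbar (Dbar X)) (fst delta_bar A)"
    by (simp add: delta_bar_def Dbar_simps del_def I_D fun_eq_iff)
next
  fix A B C f g assume "f \<in> cHom (Dbar X) A B" "g \<in> cHom (Dbar X) B C"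
  then show "del (cComp (Dbar X) A B C f g) = cComp (Dbar (Dbar X)) (fst delta_bar A) (fst delta_bar B) (fst delta_bar C) (del f) (del g)"
    by (simp add: delta_bar_def Dbar_simps Dc_D)
next
  fix A B assume A: "A \<in> cOb (Dbar X)" and B: "B \<in> cOb (Dbar X)"
  then have A': "A \<in> Ob" and B': "B \<in> Ob" by (simp_all add: Dbar_simps)
  show "fst delta_bar (cProd (Dbar X) A B) = cProd (Dbar (Dbar X)) (fst delta_bar A) (fst delta_bar B)"
    by (simp add: delta_bar_def Dbar_simps)
  show "del (cPi0 (Dbar X) A B) = cPi0 (Dbar (Dbar X)) (fst delta_bar A) (fst delta_bar B)"
    using Lf_D[OF pr_ob[OF A' B'] p0_hom[OF A' B']] by (simp add: delta_bar_def Dbar_simps)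
  show "del (cPi1 (Dbar X) A B) = cPi1 (Dbar (Dbar X)) (fst delta_bar A) (fst delta_bar B)"
    using Lf_D[OF pr_ob[OF A' B'] p1_hom[OF A' B']] by (simp add: delta_bar_def Dbar_simps)
next
  show "fst delta_bar (cTerm (Dbar X)) = cTerm (Dbar (Dbar X))" by (simp add: delta_bar_def Dbar_simps)
next
  fix A B f g assume "f \<in> cHom (Dbar X) A B" "g \<in> cHom (Dbar X) A B"
  then show "del (cAdd (Dbar X) A B f g) = cAdd (Dbar (Dbar X)) (fst delta_bar A) (fst delta_bar B) (del f) (del g)"
    by (simp add: delta_bar_def Dbar_simps del_def)
next
  fix A B assume "A \<in> cOb (Dbar X)" "B \<in> cOb (Dbar X)"
  then show "del (cZero (Dbar X) A B) = cZero (Dbar (Dbar X)) (fst delta_bar A) (fst delta_bar B)"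
    by (simp add: delta_bar_def Dbar_simps del_def)
qed

end


context clac begin

lemma eps_hom: "clac_hom (Dbar X) X eps_bar"
  unfolding clac_hom_def eps_bar_def Dbar_simps
proof (intro conjI allI impI ballI)
  fix A B f assume "f \<in> DH X A B" then show "snd (id, \<lambda>f. f 0) f \<in> Hom (fst (id, \<lambda>f. f 0) A) (fst (id, \<lambda>f. f 0) B)"
    by (simp add: DH_iff del: PO_0) (metis PO_0)
next
  fix A B C f g assume "f \<in> DH X A B" "g \<in> DH X B C"
  then show "snd (id, \<lambda>f. f 0) (Dc X A B C f g) = cmp (fst (id, \<lambda>f. f 0) A) (fst (id, \<lambda>f. f 0) B) (fst (id, \<lambda>f. f 0) C) (snd (id, \<lambda>f. f 0) f) (snd (id, \<lambda>f. f 0) g)"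
    by (simp add: Dc_def)
next
  fix A B assume "A \<in> Ob" "B \<in> Ob"
  then show "snd (id, \<lambda>f. f 0) (Lf X (cProd X A B) A (p0 A B)) = p0 (fst (id, \<lambda>f. f 0) A) (fst (id, \<lambda>f. f 0) B)"
    "snd (id, \<lambda>f. f 0) (Lf X (cProd X A B) B (p1 A B)) = p1 (fst (id, \<lambda>f. f 0) A) (fst (id, \<lambda>f. f 0) B)"
    by (simp_all add: Lf_def id_l p0_hom p1_hom)
qed (simp_all)

end

locale chom = X: clac X + Y: clac Y
  for X :: "('o, 'a, 'z) clac_sig_scheme" and Y :: "('p, 'b, 'w) clac_sig_scheme" +
  fixes F :: "('o, 'a, 'p, 'b) cfunctor"
  assumes hom: "clac_hom X Y F"
begin

abbreviation "FO \<equiv> fst F"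
abbreviation "FA \<equiv> snd F"

lemma FO: "A \<in> cOb X \<Longrightarrow> FO A \<in> cOb Y" using hom unfolding clac_hom_def by metis
lemma FH: "f \<in> cHom X A B \<Longrightarrow> FA f \<in> cHom Y (FO A) (FO B)" using hom unfolding clac_hom_def by metis
lemma F_id: "A \<in> cOb X \<Longrightarrow> FA (cId X A) = cId Y (FO A)" using hom unfolding clac_hom_def by metis
lemma F_comp: "f \<in> cHom X A B \<Longrightarrow> g \<in> cHom X B C \<Longrightarrow>
   FA (cComp X A B C f g) = cComp Y (FO A) (FO B) (FO C) (FA f) (FA g)" using hom unfolding clac_hom_def by metis
lemma F_prod: "A \<in> cOb X \<Longrightarrow> B \<in> cOb X \<Longrightarrow> FO (cProd X A B) = cProd Y (FO A) (FO B)"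
  using hom unfolding clac_hom_def by metis
lemma F_p0: "A \<in> cOb X \<Longrightarrow> B \<in> cOb X \<Longrightarrow> FA (cPi0 X A B) = cPi0 Y (FO A) (FO B)"
  using hom unfolding clac_hom_def by metis
lemma F_p1: "A \<in> cOb X \<Longrightarrow> B \<in> cOb X \<Longrightarrow> FA (cPi1 X A B) = cPi1 Y (FO A) (FO B)"
  using hom unfolding clac_hom_def by metis
lemma F_term: "FO (cTerm X) = cTerm Y" using hom unfolding clac_hom_def by metis
lemma F_add: "f \<in> cHom X A B \<Longrightarrow> g \<in> cHom X A B \<Longrightarrow> FA (cAdd X A B f g) = cAdd Y (FO A) (FO B) (FA f) (FA g)"
  using hom unfolding clac_hom_def by metis
lemma F_zero: "A \<in> cOb X \<Longrightarrow> B \<in> cOb X \<Longrightarrow> FA (cZero X A B) = cZero Y (FO A) (FO B)"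
  using hom unfolding clac_hom_def by metis

lemma F_pair: assumes f: "f \<in> cHom X C A" and g: "g \<in> cHom X C B"
  shows "FA (cPair X C A B f g) = cPair Y (FO C) (FO A) (FO B) (FA f) (FA g)"
proof -
  have A: "A \<in> cOb X" and B: "B \<in> cOb X" using f g by (auto intro: X.cod_ob)
  have ph: "cPair X C A B f g \<in> cHom X C (cProd X A B)" using f g by blast
  show ?thesis
  proof (rule Y.pair_ext)
    show "FA (cPair X C A B f g) \<in> cHom Y (FO C) (cProd Y (FO A) (FO B))" using FH[OF ph] F_prod[OF A B] by simp
    show "FO A \<in> cOb Y" "FO B \<in> cOb Y" using FO A B by auto
    show "cComp Y (FO C) (cProd Y (FO A) (FO B)) (FO A) (FA (cPair X C A B f g)) (cPi0 Y (FO A) (FO B)) = FA f"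
      using F_comp[OF ph X.p0_hom[OF A B]] F_prod[OF A B] F_p0[OF A B] X.pair_p0[OF f g] by simp
    show "cComp Y (FO C) (cProd Y (FO A) (FO B)) (FO B) (FA (cPair X C A B f g)) (cPi1 Y (FO A) (FO B)) = FA g"
      using F_comp[OF ph X.p1_hom[OF A B]] F_prod[OF A B] F_p1[OF A B] X.pair_p1[OF f g] by simp
  qed
qed

lemma F_PP: "A \<in> cOb X \<Longrightarrow> FO (Pobj X A) = Pobj Y (FO A)"
  using F_prod[of A A] by simp

lemma F_PO: "A \<in> cOb X \<Longrightarrow> FO (Pn_obj X n A) = Pn_obj Y n (FO A)"
proof (induction n)
  case 0 then show ?case by simp
next
  case (Suc n)
  have "FO (Pn_obj X (Suc n) A) = FO (Pobj X (Pn_obj X n A))" by simp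
  also have "\<dots> = Pobj Y (FO (Pn_obj X n A))" using F_PP[OF X.PO_ob[OF Suc.prems]] .
  finally show ?case using Suc by simp
qed

lemma F_Parr: assumes f: "f \<in> cHom X A B" shows "FA (Parr X A B f) = Parr Y (FO A) (FO B) (FA f)"
proof -
  have A: "A \<in> cOb X" and B: "B \<in> cOb X" using f by (auto intro: X.dom_ob X.cod_ob)
  have a: "cComp X (Pobj X A) A B (cPi0 X A A) f \<in> cHom X (Pobj X A) B" using f A by blast
  have b: "cComp X (Pobj X A) A B (cPi1 X A A) f \<in> cHom X (Pobj X A) B" using f A by blast
  show ?thesis unfolding Parr_def
    using F_pair[OF a b] F_comp[OF X.p0P[OF A] f] F_comp[OF X.p1P[OF A] f] F_PP[OF A] F_p0[OF A A] F_p1[OF A A]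
    by simp
qed

lemma F_PA: "f \<in> cHom X A B \<Longrightarrow> FA (Pn_arr X n A B f) = Pn_arr Y n (FO A) (FO B) (FA f)"
proof (induction n)
  case 0 then show ?case by simp
next
  case (Suc n)
  have A: "A \<in> cOb X" and B: "B \<in> cOb X" using Suc.prems by (auto intro: X.dom_ob X.cod_ob)
  show ?case using F_Parr[OF X.PA_hom[OF Suc.prems, of n]] Suc F_PO[OF A] F_PO[OF B] by simp
qed

lemma F_I: "A \<in> cOb X \<Longrightarrow> FA (Iseq X A n) = Iseq Y (FO A) n"
proof (induction n)
  case 0 then show ?case by (simp add: F_id)
next
  case (Suc n)
  have p: "cPi1 X (Pn_obj X n A) (Pn_obj X n A) \<in> cHom X (Pn_obj X (Suc n) A) (Pn_obj X n A)"
    using X.p1P[of "Pn_obj X n A"] X.PO_ob[OF Suc.prems] by simp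
  show ?case using F_comp[OF p X.I_hom[OF Suc.prems, of n]] Suc F_PO[OF Suc.prems] F_p1[OF X.PO_ob X.PO_ob, OF Suc.prems Suc.prems]
    by simp
qed

lemma F_DH: "f \<in> DH X A B \<Longrightarrow> (\<lambda>k. FA (f k)) \<in> DH Y (FO A) (FO B)"
proof -
  assume f: "f \<in> DH X A B"
  have A: "A \<in> cOb X" using X.DH_ob[OF f] by auto
  show ?thesis unfolding DH_iff
  proof
    fix n
    have "f n \<in> cHom X (Pn_obj X n A) B" using f by (simp add: DH_iff)
    then show "FA (f n) \<in> cHom Y (Pn_obj Y n (FO A)) (FO B)" using FH F_PO[OF A] by metis
  qed
qed

lemma F_Ts: assumes g: "g \<in> DH X A B"
  shows "FA (Tseq X A B g k) = Tseq Y (FO A) (FO B) (\<lambda>k. FA (g k)) k"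
proof -
  have A: "A \<in> cOb X" and B: "B \<in> cOb X" using X.DH_ob[OF g] by auto
  have q: "Pn_arr X k (Pobj X A) A (cPi0 X A A) \<in> cHom X (Pn_obj X (Suc k) A) (Pn_obj X k A)"
    using X.PA_hom[OF X.p0P[OF A], of k] by simp
  have gk: "g k \<in> cHom X (Pn_obj X k A) B" and gS: "g (Suc k) \<in> cHom X (Pn_obj X (Suc k) A) B"
    using g by (auto simp: DH_iff)
  show ?thesis unfolding Tseq_def
    using F_pair[OF X.comp_hom[OF q gk] gS] F_comp[OF q gk] F_PO[OF A] F_PA[OF X.p0P[OF A], of k]
      F_PP[OF A] F_p0[OF A A] by simp
qed

lemma F_T: "f \<in> DH X A B \<Longrightarrow> (\<lambda>k. FA (Tn X n A B f k)) = Tn Y n (FO A) (FO B) (\<lambda>k. FA (f k))"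
proof (induction n)
  case 0 then show ?case by simp
next
  case (Suc n)
  have A: "A \<in> cOb X" and B: "B \<in> cOb X" using X.DH_ob[OF Suc.prems] by auto
  show ?case using F_Ts[OF X.T_hom[OF Suc.prems, of n]] Suc F_PO[OF A] F_PO[OF B] by simp
qed

lemma Dbar_F_hom: "clac_hom (Dbar X) (Dbar Y) (Dbar_map F)"
  unfolding clac_hom_def Dbar_map_def Dbar_simps fst_conv snd_conv
proof (intro conjI allI impI ballI)
  fix A assume "A \<in> cOb X" then show "FO A \<in> cOb Y" by (rule FO)
next
  fix A B f assume "f \<in> DH X A B" then show "(\<lambda>n. FA (f n)) \<in> DH Y (FO A) (FO B)" by (rule F_DH)
next
  fix A assume "A \<in> cOb X" then show "(\<lambda>n. FA (Iseq X A n)) = Iseq Y (FO A)" by (simp add: F_I fun_eq_iff)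
next
  fix A B C f g assume f: "f \<in> DH X A B" and g: "g \<in> DH X B C"
  have A: "A \<in> cOb X" and B: "B \<in> cOb X" using X.DH_ob[OF f] by auto
  show "(\<lambda>n. FA (Dc X A B C f g n)) = Dc Y (FO A) (FO B) (FO C) (\<lambda>n. FA (f n)) (\<lambda>n. FA (g n))"
  proof
    fix n
    have "FA (Tn X n A B f 0) = Tn Y n (FO A) (FO B) (\<lambda>k. FA (f k)) 0" using F_T[OF f, of n] by (metis)
    then show "FA (Dc X A B C f g n) = Dc Y (FO A) (FO B) (FO C) (\<lambda>n. FA (f n)) (\<lambda>n. FA (g n)) n"
      unfolding Dc_def using F_comp[OF X.T_hom0[OF f, of n], of "g n" C] g F_PO[OF A] F_PO[OF B]
      by (simp add: DH_iff)
  qed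
next
  fix A B assume A: "A \<in> cOb X" and B: "B \<in> cOb X"
  show "FO (cProd X A B) = cProd Y (FO A) (FO B)" using F_prod[OF A B] .
  have AB: "cProd X A B \<in> cOb X" using A B by blast
  show "(\<lambda>n. FA (Lf X (cProd X A B) A (cPi0 X A B) n)) = Lf Y (cProd Y (FO A) (FO B)) (FO A) (cPi0 Y (FO A) (FO B))"
    unfolding Lf_def using F_comp[OF X.I_hom[OF AB] X.p0_hom[OF A B]] F_I[OF AB] F_PO[OF AB] F_prod[OF A B] F_p0[OF A B]
    by simp
  show "(\<lambda>n. FA (Lf X (cProd X A B) B (cPi1 X A B) n)) = Lf Y (cProd Y (FO A) (FO B)) (FO B) (cPi1 Y (FO A) (FO B))"
    unfolding Lf_def using F_comp[OF X.I_hom[OF AB] X.p1_hom[OF A B]] F_I[OF AB] F_PO[OF AB] F_prod[OF A B] F_p1[OF A B]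
    by simp
next
  show "FO (cTerm X) = cTerm Y" by (rule F_term)
next
  fix A B f g assume f: "f \<in> DH X A B" and g: "g \<in> DH X A B"
  have A: "A \<in> cOb X" using X.DH_ob[OF f] by auto
  show "(\<lambda>n. FA (cAdd X (Pn_obj X n A) B (f n) (g n))) = (\<lambda>n. cAdd Y (Pn_obj Y n (FO A)) (FO B) (FA (f n)) (FA (g n)))"
    using f g F_add F_PO[OF A] by (simp add: DH_iff)
next
  fix A B assume A: "A \<in> cOb X" and B: "B \<in> cOb X"
  show "(\<lambda>n. FA (cZero X (Pn_obj X n A) B)) = (\<lambda>n. cZero Y (Pn_obj Y n (FO A)) (FO B))"
    using F_zero[OF X.PO_ob[OF A] B] F_PO[OF A] by simp
qed

end

theorem proposition3p25:
  fixes X :: "('o, 'a) clac_sig" and Y :: "('p, 'b) clac_sig" and Z :: "('q, 'c) clac_sig"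
    and F :: "('o, 'a, 'p, 'b) cfunctor" and G :: "('p, 'b, 'q, 'c) cfunctor"
  assumes "is_clac X" and "is_clac Y" and "is_clac Z"
    and "clac_hom X Y F" and "clac_hom Y Z G"
  shows
    \<comment> \<open>D-bar is an endofunctor of CLAC\<close>
    "is_clac (Dbar X) \<and>
     clac_hom (Dbar X) (Dbar Y) (Dbar_map F) \<and>
     functor_eq (Dbar X) (Dbar_map fid) fid \<and>
     functor_eq (Dbar X) (Dbar_map (ffcomp F G)) (ffcomp (Dbar_map F) (Dbar_map G)) \<and>
    \<comment> \<open>epsilon-bar is a natural transformation D-bar => Id\<close>
     clac_hom (Dbar X) X eps_bar \<and>
     functor_eq (Dbar X) (ffcomp (Dbar_map F) eps_bar) (ffcomp eps_bar F) \<and>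
    \<comment> \<open>delta-bar is a natural transformation D-bar => D-bar D-bar\<close>
     clac_hom (Dbar X) (Dbar (Dbar X)) delta_bar \<and>
     functor_eq (Dbar X) (ffcomp (Dbar_map F) delta_bar) (ffcomp delta_bar (Dbar_map (Dbar_map F))) \<and>
    \<comment> \<open>comonad laws\<close>
     functor_eq (Dbar X) (ffcomp delta_bar eps_bar) fid \<and>
     functor_eq (Dbar X) (ffcomp delta_bar (Dbar_map eps_bar)) fid \<and>
     functor_eq (Dbar X) (ffcomp delta_bar delta_bar) (ffcomp delta_bar (Dbar_map delta_bar))"
proof -
  interpret X: clac X by (unfold_locales) fact
  interpret XY: chom X Y F by (unfold_locales) fact+
  have e: "functor_eq (Dbar X) (Dbar_map fid) fid \<and>
     functor_eq (Dbar X) (Dbar_map (ffcomp F G)) (ffcomp (Dbar_map F) (Dbar_map G)) \<and>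
     functor_eq (Dbar X) (ffcomp (Dbar_map F) eps_bar) (ffcomp eps_bar F) \<and>
     functor_eq (Dbar X) (ffcomp (Dbar_map F) delta_bar) (ffcomp delta_bar (Dbar_map (Dbar_map F))) \<and>
     functor_eq (Dbar X) (ffcomp delta_bar eps_bar) fid \<and>
     functor_eq (Dbar X) (ffcomp delta_bar (Dbar_map eps_bar)) fid \<and>
     functor_eq (Dbar X) (ffcomp delta_bar delta_bar) (ffcomp delta_bar (Dbar_map delta_bar))"
    by (simp add: functor_eq_def Dbar_map_def fid_def ffcomp_def eps_bar_def delta_bar_def Dshift_pow add.assoc)
  show ?thesis using e X.Dbar_clac XY.Dbar_F_hom X.eps_hom X.delta_hom by simp
qed


end
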